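(* Let $\phi(x)$ be a formula of Peano Arithmetic (PA) with a single free variable $x$. Then there exist sentences (formulas with no free variables) $\sigma$ and $\tau$ of PA such that $$\mathrm{PA} \vdash \sigma \leftrightarrow \phi(\lceil \tau \rceil) \quad\text{and}\quad \mathrm{PA} \vdash \tau \leftrightarrow \lnot \phi(\lceil \sigma \rceil).$$
   Context: Peano Arithmetic (PA) is the first-order theory in the language with constant $0$, unary function symbol $S$ (successor), binary function symbols $+,*$, binary relation symbols $=,<,>$, the usual logical connectives and quantifiers, and variables $x_0,x_1,x_2,\dots$, with the standard axioms for successor, addition, multiplication, equality and the induction scheme. $\mathrm{PA}\vdash\chi$ means $\chi$ is derivable in PA. For a formula $\psi$, $\lceil \psi \rceil\in\mathbb{N}$ denotes its Gödel number under a fixed effective injective encoding of formulas by natural numbers (e.g. assign each symbol a positive integer code and map the string $s_1\cdots s_k$ with codes $n_1,\dots,n_k$ to $2^{n_1}3^{n_2}\cdots p_k^{n_k}$). When a natural number $n$ appears as an argument inside a PA formula, it stands for the numeral $S^{(n)}0 = S\cdots S0$ ($n$ copies of $S$); thus $\phi(\lceil\tau\rceil)$ is the result of substituting the numeral for $\lceil\tau\rceil$ for the free variable $x$ of $\phi$. *)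

theory Defs
  imports Main "HOL-Library.Nat_Bijection"
begin

datatype tm = Zero | Var nat | Succ tm | Plus tm tm | Times tm tm

datatype fm =
    Eq tm tm | Less tm tm | Greater tm tm
  | Neg fm | Conj fm fm | Disj fm fm | Imp fm fm | Iff fm fm
  | All nat fm | Ex nat fm

primrec vars_tm :: "tm \<Rightarrow> nat set" where
  "vars_tm Zero = {}"
| "vars_tm (Var i) = {i}"
| "vars_tm (Succ t) = vars_tm t"
| "vars_tm (Plus s t) = vars_tm s \<union> vars_tm t"
| "vars_tm (Times s t) = vars_tm s \<union> vars_tm t"

primrec fv :: "fm \<Rightarrow> nat set" where
  "fv (Eq s t) = vars_tm s \<union> vars_tm t"
| "fv (Less s t) = vars_tm s \<union> vars_tm t"
| "fv (Greater s t) = vars_tm s \<union> vars_tm t"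
| "fv (Neg a) = fv a"
| "fv (Conj a b) = fv a \<union> fv b"
| "fv (Disj a b) = fv a \<union> fv b"
| "fv (Imp a b) = fv a \<union> fv b"
| "fv (Iff a b) = fv a \<union> fv b"
| "fv (All x a) = fv a - {x}"
| "fv (Ex x a) = fv a - {x}"

definition sentence :: "fm \<Rightarrow> bool" where
  "sentence a \<longleftrightarrow> fv a = {}"

primrec num :: "nat \<Rightarrow> tm" where
  "num 0 = Zero"
| "num (Suc n) = Succ (num n)"

text \<open>Substitution of a term for the free occurrences of a variable
 (no renaming; only used when the term is substitutable, e.g. closed).\<close>
primrec subst_tm :: "nat \<Rightarrow> tm \<Rightarrow> tm \<Rightarrow> tm" where
  "subst_tm x u Zero = Zero"
| "subst_tm x u (Var i) = (if i = x then u else Var i)"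
| "subst_tm x u (Succ t) = Succ (subst_tm x u t)"
| "subst_tm x u (Plus s t) = Plus (subst_tm x u s) (subst_tm x u t)"
| "subst_tm x u (Times s t) = Times (subst_tm x u s) (subst_tm x u t)"

primrec subst :: "nat \<Rightarrow> tm \<Rightarrow> fm \<Rightarrow> fm" where
  "subst x u (Eq s t) = Eq (subst_tm x u s) (subst_tm x u t)"
| "subst x u (Less s t) = Less (subst_tm x u s) (subst_tm x u t)"
| "subst x u (Greater s t) = Greater (subst_tm x u s) (subst_tm x u t)"
| "subst x u (Neg a) = Neg (subst x u a)"
| "subst x u (Conj a b) = Conj (subst x u a) (subst x u b)"
| "subst x u (Disj a b) = Disj (subst x u a) (subst x u b)"
| "subst x u (Imp a b) = Imp (subst x u a) (subst x u b)"
| "subst x u (Iff a b) = Iff (subst x u a) (subst x u b)"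
| "subst x u (All y a) = (if y = x then All y a else All y (subst x u a))"
| "subst x u (Ex y a) = (if y = x then Ex y a else Ex y (subst x u a))"

primrec substitutable :: "nat \<Rightarrow> tm \<Rightarrow> fm \<Rightarrow> bool" where
  "substitutable x u (Eq s t) = True"
| "substitutable x u (Less s t) = True"
| "substitutable x u (Greater s t) = True"
| "substitutable x u (Neg a) = substitutable x u a"
| "substitutable x u (Conj a b) = (substitutable x u a \<and> substitutable x u b)"
| "substitutable x u (Disj a b) = (substitutable x u a \<and> substitutable x u b)"
| "substitutable x u (Imp a b) = (substitutable x u a \<and> substitutable x u b)"
| "substitutable x u (Iff a b) = (substitutable x u a \<and> substitutable x u b)"
| "substitutable x u (All y a) =
     (x \<notin> fv (All y a) \<or> (y \<notin> vars_tm u \<and> substitutable x u a))"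
| "substitutable x u (Ex y a) =
     (x \<notin> fv (Ex y a) \<or> (y \<notin> vars_tm u \<and> substitutable x u a))"

text \<open>Prime formulas (atomic and quantified) get arbitrary truth values.\<close>
primrec peval :: "(fm \<Rightarrow> bool) \<Rightarrow> fm \<Rightarrow> bool" where
  "peval v (Eq s t) = v (Eq s t)"
| "peval v (Less s t) = v (Less s t)"
| "peval v (Greater s t) = v (Greater s t)"
| "peval v (Neg a) = (\<not> peval v a)"
| "peval v (Conj a b) = (peval v a \<and> peval v b)"
| "peval v (Disj a b) = (peval v a \<or> peval v b)"
| "peval v (Imp a b) = (peval v a \<longrightarrow> peval v b)"
| "peval v (Iff a b) = (peval v a \<longleftrightarrow> peval v b)"
| "peval v (All x a) = v (All x a)"
| "peval v (Ex x a) = v (Ex x a)"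

definition tautology :: "fm \<Rightarrow> bool" where
  "tautology a \<longleftrightarrow> (\<forall>v. peval v a)"

text \<open>Non-logical axioms (free variables are implicitly generalised by Gen).
 Variables: x = 0, y = 1, z = 2.\<close>
inductive PA_axiom :: "fm \<Rightarrow> bool" where
  succ_ne_zero: "PA_axiom (Neg (Eq (Succ (Var 0)) Zero))"
| succ_inj: "PA_axiom (Imp (Eq (Succ (Var 0)) (Succ (Var 1))) (Eq (Var 0) (Var 1)))"
| plus_zero: "PA_axiom (Eq (Plus (Var 0) Zero) (Var 0))"
| plus_succ: "PA_axiom (Eq (Plus (Var 0) (Succ (Var 1))) (Succ (Plus (Var 0) (Var 1))))"
| times_zero: "PA_axiom (Eq (Times (Var 0) Zero) Zero)"
| times_succ: "PA_axiom (Eq (Times (Var 0) (Succ (Var 1))) (Plus (Times (Var 0) (Var 1)) (Var 0)))"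
| less_def: "PA_axiom (Iff (Less (Var 0) (Var 1))
                (Ex 2 (Eq (Plus (Var 0) (Succ (Var 2))) (Var 1))))"
| greater_def: "PA_axiom (Iff (Greater (Var 0) (Var 1)) (Less (Var 1) (Var 0)))"
| induction: "PA_axiom (Imp (Conj (subst x Zero a)
                              (All x (Imp a (subst x (Succ (Var x)) a))))
                        (All x a))"

text \<open>Hilbert-style first-order calculus (Enderton) with rules MP and Gen.\<close>
inductive PA_prv :: "fm \<Rightarrow> bool" where
  ax_PA: "PA_axiom a \<Longrightarrow> PA_prv a"
| ax_taut: "tautology a \<Longrightarrow> PA_prv a"
| ax_inst: "substitutable x u a \<Longrightarrow> PA_prv (Imp (All x a) (subst x u a))"
| ax_vac: "x \<notin> fv a \<Longrightarrow> PA_prv (Imp a (All x a))"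
| ax_dist: "PA_prv (Imp (All x (Imp a b)) (Imp (All x a) (All x b)))"
| ax_ex: "PA_prv (Iff (Ex x a) (Neg (All x (Neg a))))"
| ax_refl: "PA_prv (Eq u u)"
| ax_eqsub: "substitutable x s a \<Longrightarrow> substitutable x t a \<Longrightarrow>
             PA_prv (Imp (Eq s t) (Imp (subst x s a) (subst x t a)))"
| mp: "PA_prv (Imp a b) \<Longrightarrow> PA_prv a \<Longrightarrow> PA_prv b"
| gen: "PA_prv a \<Longrightarrow> PA_prv (All x a)"

primrec code_tm :: "tm \<Rightarrow> nat" where
  "code_tm Zero = prod_encode (0, 0)"
| "code_tm (Var i) = prod_encode (1, i)"
| "code_tm (Succ t) = prod_encode (2, code_tm t)"
| "code_tm (Plus s t) = prod_encode (3, prod_encode (code_tm s, code_tm t))"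
| "code_tm (Times s t) = prod_encode (4, prod_encode (code_tm s, code_tm t))"

primrec gn :: "fm \<Rightarrow> nat" where
  "gn (Eq s t) = prod_encode (0, prod_encode (code_tm s, code_tm t))"
| "gn (Less s t) = prod_encode (1, prod_encode (code_tm s, code_tm t))"
| "gn (Greater s t) = prod_encode (2, prod_encode (code_tm s, code_tm t))"
| "gn (Neg a) = prod_encode (3, gn a)"
| "gn (Conj a b) = prod_encode (4, prod_encode (gn a, gn b))"
| "gn (Disj a b) = prod_encode (5, prod_encode (gn a, gn b))"
| "gn (Imp a b) = prod_encode (6, prod_encode (gn a, gn b))"
| "gn (Iff a b) = prod_encode (7, prod_encode (gn a, gn b))"
| "gn (All x a) = prod_encode (8, prod_encode (x, gn a))"
| "gn (Ex x a) = prod_encode (9, prod_encode (x, gn a))"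

end

theory Submission
  imports Defs "HOL-Number_Theory.Cong"
begin


section \<open>Semantics and syntax lemmas\<close>

primrec ev_tm :: "(nat \<Rightarrow> nat) \<Rightarrow> tm \<Rightarrow> nat" where
  "ev_tm e Zero = 0"
| "ev_tm e (Var i) = e i"
| "ev_tm e (Succ t) = Suc (ev_tm e t)"
| "ev_tm e (Plus s t) = ev_tm e s + ev_tm e t"
| "ev_tm e (Times s t) = ev_tm e s * ev_tm e t"

primrec ev :: "(nat \<Rightarrow> nat) \<Rightarrow> fm \<Rightarrow> bool" where
  "ev e (Eq s t) = (ev_tm e s = ev_tm e t)"
| "ev e (Less s t) = (ev_tm e s < ev_tm e t)"
| "ev e (Greater s t) = (ev_tm e s > ev_tm e t)"
| "ev e (Neg a) = (\<not> ev e a)"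
| "ev e (Conj a b) = (ev e a \<and> ev e b)"
| "ev e (Disj a b) = (ev e a \<or> ev e b)"
| "ev e (Imp a b) = (ev e a \<longrightarrow> ev e b)"
| "ev e (Iff a b) = (ev e a \<longleftrightarrow> ev e b)"
| "ev e (All x a) = (\<forall>k. ev (e(x:=k)) a)"
| "ev e (Ex x a) = (\<exists>k. ev (e(x:=k)) a)"

primrec sz :: "fm \<Rightarrow> nat" where
  "sz (Eq s t) = 0"
| "sz (Less s t) = 0"
| "sz (Greater s t) = 0"
| "sz (Neg a) = Suc (sz a)"
| "sz (Conj a b) = Suc (sz a + sz b)"
| "sz (Disj a b) = Suc (sz a + sz b)"
| "sz (Imp a b) = Suc (sz a + sz b)"
| "sz (Iff a b) = Suc (sz a + sz b)"
| "sz (All x a) = Suc (sz a)"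
| "sz (Ex x a) = Suc (sz a)"

primrec allv :: "fm \<Rightarrow> nat set" where
  "allv (Eq s t) = vars_tm s \<union> vars_tm t"
| "allv (Less s t) = vars_tm s \<union> vars_tm t"
| "allv (Greater s t) = vars_tm s \<union> vars_tm t"
| "allv (Neg a) = allv a"
| "allv (Conj a b) = allv a \<union> allv b"
| "allv (Disj a b) = allv a \<union> allv b"
| "allv (Imp a b) = allv a \<union> allv b"
| "allv (Iff a b) = allv a \<union> allv b"
| "allv (All x a) = insert x (allv a)"
| "allv (Ex x a) = insert x (allv a)"

lemma finite_vars_tm[simp]: "finite (vars_tm t)"
  by (induct t) auto

lemma finite_allv[simp]: "finite (allv a)"
  by (induct a) auto

lemma fv_allv: "fv a \<subseteq> allv a"
  by (induct a) auto

lemma finite_fv[simp]: "finite (fv a)"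
  using fv_allv finite_allv finite_subset by blast

lemma sz_subst[simp]: "sz (subst x u a) = sz a"
  by (induct a) auto

lemma ev_tm_subst: "ev_tm e (subst_tm x u t) = ev_tm (e(x := ev_tm e u)) t"
  by (induct t) auto

lemma ev_tm_agree: "(\<forall>v\<in>vars_tm t. e v = e' v) \<Longrightarrow> ev_tm e t = ev_tm e' t"
  by (induct t) auto

lemma ev_tm_closed: "vars_tm t = {} \<Longrightarrow> ev_tm e t = ev_tm e' t"
  using ev_tm_agree by blast

lemma ev_agree: "(\<forall>v\<in>fv a. e v = e' v) \<Longrightarrow> ev e a = ev e' a"
proof (induct a arbitrary: e e')
  case (All x a)
  have "\<And>k. ev (e(x:=k)) a = ev (e'(x:=k)) a" by (rule All(1)) (use All(2) in auto)
  then show ?case by simp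
next
  case (Ex x a)
  have "\<And>k. ev (e(x:=k)) a = ev (e'(x:=k)) a" by (rule Ex(1)) (use Ex(2) in auto)
  then show ?case by simp
next
  case (Eq s t)
  then have "ev_tm e s = ev_tm e' s" "ev_tm e t = ev_tm e' t" by (auto intro: ev_tm_agree)
  then show ?case by simp
next
  case (Less s t)
  then have "ev_tm e s = ev_tm e' s" "ev_tm e t = ev_tm e' t" by (auto intro: ev_tm_agree)
  then show ?case by simp
next
  case (Greater s t)
  then have "ev_tm e s = ev_tm e' s" "ev_tm e t = ev_tm e' t" by (auto intro: ev_tm_agree)
  then show ?case by simp
next
  case (Neg a) then show ?case by simp
next
  case (Conj a b)
  have "ev e a = ev e' a" "ev e b = ev e' b" using Conj by auto
  then show ?case by simp
next
  case (Disj a b)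
  have "ev e a = ev e' a" "ev e b = ev e' b" using Disj by auto
  then show ?case by simp
next
  case (Imp a b)
  have "ev e a = ev e' a" "ev e b = ev e' b" using Imp by auto
  then show ?case by simp
next
  case (Iff a b)
  have "ev e a = ev e' a" "ev e b = ev e' b" using Iff by auto
  then show ?case by simp
qed

lemma ev_closed: "fv a = {} \<Longrightarrow> ev e a = ev e' a"
  using ev_agree by blast

lemma ev_subst: "vars_tm u = {} \<Longrightarrow> ev e (subst x u a) = ev (e(x := ev_tm e u)) a"
proof (induct a arbitrary: e)
  case (All y a)
  show ?case
  proof (cases "y = x")
    case True then show ?thesis by (simp add: fun_upd_upd del: fun_upd_apply)
  next
    case False
    have cl: "\<And>k. ev_tm (e(y:=k)) u = ev_tm e u" using All(2) ev_tm_closed by blast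
    have eq: "\<And>k. (e(y:=k))(x:= ev_tm (e(y:=k)) u) = (e(x:=ev_tm e u))(y:=k)"
      using False cl by (simp add: fun_upd_twist del: fun_upd_apply)
    show ?thesis using False by (simp only: subst.simps ev.simps if_False All(1)[OF All(2)] eq)
  qed
next
  case (Ex y a)
  show ?case
  proof (cases "y = x")
    case True then show ?thesis by (simp add: fun_upd_upd del: fun_upd_apply)
  next
    case False
    have cl: "\<And>k. ev_tm (e(y:=k)) u = ev_tm e u" using Ex(2) ev_tm_closed by blast
    have eq: "\<And>k. (e(y:=k))(x:= ev_tm (e(y:=k)) u) = (e(x:=ev_tm e u))(y:=k)"
      using False cl by (simp add: fun_upd_twist del: fun_upd_apply)
    show ?thesis using False by (simp only: subst.simps ev.simps if_False Ex(1)[OF Ex(2)] eq)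
  qed
qed (auto simp: ev_tm_subst)

lemma vars_num[simp]: "vars_tm (num n) = {}"
  by (induct n) auto

lemma ev_num[simp]: "ev_tm e (num n) = n"
  by (induct n) auto

lemma subst_tm_fresh[simp]: "x \<notin> vars_tm t \<Longrightarrow> subst_tm x u t = t"
  by (induct t) auto

lemma subst_fresh: "x \<notin> fv a \<Longrightarrow> subst x u a = a"
  by (induct a) auto

lemma subst_tm_self[simp]: "subst_tm x (Var x) t = t"
  by (induct t) auto

lemma subst_self[simp]: "subst x (Var x) a = a"
  by (induct a) auto

lemma substitutable_self[simp]: "substitutable x (Var x) a"
  by (induct a) auto

lemma substitutable_closed[simp]: "vars_tm u = {} \<Longrightarrow> substitutable x u a"
  by (induct a) auto

lemma vars_subst_tm: "vars_tm (subst_tm x u t) \<subseteq> (vars_tm t - {x}) \<union> vars_tm u"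
  by (induct t) auto

lemma vars_subst_tm_closed[simp]: "vars_tm u = {} \<Longrightarrow> vars_tm (subst_tm x u t) = vars_tm t - {x}"
  by (induct t) auto

lemma fv_subst: "fv (subst x u a) \<subseteq> (fv a - {x}) \<union> vars_tm u"
  by (induct a) (auto dest: subsetD[OF vars_subst_tm])

lemma fv_subst_closed[simp]: "vars_tm u = {} \<Longrightarrow> fv (subst x u a) = fv a - {x}"
  by (induct a) auto

lemma subst_tm_comp: "z \<notin> vars_tm t \<Longrightarrow> subst_tm z u (subst_tm x (Var z) t) = subst_tm x u t"
  by (induct t) auto

lemma subst_comp: "z \<notin> allv a \<Longrightarrow> subst z u (subst x (Var z) a) = subst x u a"
proof (induct a)
  case (All y a)
  have za: "z \<notin> allv a" "z \<noteq> y" using All(2) by auto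
  show ?case
  proof (cases "y = x")
    case True
    have "z \<notin> fv a" using za fv_allv by auto
    then show ?thesis using True za by (simp add: subst_fresh)
  next
    case False then show ?thesis using za All(1) by simp
  qed
next
  case (Ex y a)
  have za: "z \<notin> allv a" "z \<noteq> y" using Ex(2) by auto
  show ?case
  proof (cases "y = x")
    case True
    have "z \<notin> fv a" using za fv_allv by auto
    then show ?thesis using True za by (simp add: subst_fresh)
  next
    case False then show ?thesis using za Ex(1) by simp
  qed
qed (auto simp: subst_tm_comp)



lemma T1: "tautology (Imp a c) \<Longrightarrow> PA_prv a \<Longrightarrow> PA_prv c"
  using mp ax_taut by blast

lemma T2: "tautology (Imp a (Imp b c)) \<Longrightarrow> PA_prv a \<Longrightarrow> PA_prv b \<Longrightarrow> PA_prv c"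
  using mp ax_taut by blast

lemma T3: "tautology (Imp a (Imp b (Imp c d))) \<Longrightarrow> PA_prv a \<Longrightarrow> PA_prv b \<Longrightarrow> PA_prv c \<Longrightarrow> PA_prv d"
  using mp ax_taut by blast

lemma TT1: "PA_prv a \<Longrightarrow> tautology (Imp a c) \<Longrightarrow> PA_prv c"
  using mp ax_taut by blast

lemma TT2: "PA_prv a \<Longrightarrow> PA_prv b \<Longrightarrow> tautology (Imp a (Imp b c)) \<Longrightarrow> PA_prv c"
  using mp ax_taut by blast

lemma TT3: "PA_prv a \<Longrightarrow> PA_prv b \<Longrightarrow> PA_prv c \<Longrightarrow> tautology (Imp a (Imp b (Imp c d))) \<Longrightarrow> PA_prv d"
  using mp ax_taut by blast

lemma imp_trans: "PA_prv (Imp a b) \<Longrightarrow> PA_prv (Imp b c) \<Longrightarrow> PA_prv (Imp a c)"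
  by (rule T2[of "Imp a b" "Imp b c"]) (auto simp: tautology_def)

lemma hI: "PA_prv a \<Longrightarrow> PA_prv (Imp h a)"
  by (rule T1[of a]) (auto simp: tautology_def)

lemma hmp: "PA_prv (Imp h (Imp a b)) \<Longrightarrow> PA_prv (Imp h a) \<Longrightarrow> PA_prv (Imp h b)"
  by (rule T2[of "Imp h (Imp a b)" "Imp h a"]) (auto simp: tautology_def)

lemma hyp: "PA_prv (Imp h h)"
  by (rule ax_taut) (auto simp: tautology_def)

lemma inst: "PA_prv a \<Longrightarrow> substitutable x u a \<Longrightarrow> PA_prv (subst x u a)"
  using mp[OF ax_inst gen] by blast

lemma all_elim: "PA_prv (All x a) \<Longrightarrow> substitutable x u a \<Longrightarrow> PA_prv (subst x u a)"
  using mp ax_inst by blast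

lemma all_intro: "PA_prv (Imp a b) \<Longrightarrow> x \<notin> fv a \<Longrightarrow> PA_prv (Imp a (All x b))"
proof -
  assume h: "PA_prv (Imp a b)" "x \<notin> fv a"
  have "PA_prv (All x (Imp a b))" using h(1) by (rule gen)
  then have "PA_prv (Imp (All x a) (All x b))" using ax_dist mp by blast
  moreover have "PA_prv (Imp a (All x a))" using ax_vac h(2) by blast
  ultimately show ?thesis using imp_trans by blast
qed

lemma ex_elim: "PA_prv (Imp a b) \<Longrightarrow> x \<notin> fv b \<Longrightarrow> PA_prv (Imp (Ex x a) b)"
proof -
  assume h: "PA_prv (Imp a b)" "x \<notin> fv b"
  have "PA_prv (Imp (Neg b) (Neg a))" using h(1) by (rule T1[rotated]) (auto simp: tautology_def)
  then have "PA_prv (Imp (Neg b) (All x (Neg a)))" using all_intro h(2) by simp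
  with ax_ex[of x a] show ?thesis by (rule T2[rotated]) (auto simp: tautology_def)
qed

lemma ex_intro: "substitutable x u a \<Longrightarrow> PA_prv (Imp (subst x u a) (Ex x a))"
proof -
  assume s: "substitutable x u a"
  have "PA_prv (Imp (All x (Neg a)) (subst x u (Neg a)))" using s by (intro ax_inst) simp
  then have "PA_prv (Imp (All x (Neg a)) (Neg (subst x u a)))" by simp
  with ax_ex[of x a] show ?thesis by (rule T2[rotated]) (auto simp: tautology_def)
qed

lemma ex_intro_h: "substitutable x u a \<Longrightarrow> PA_prv (Imp h (subst x u a)) \<Longrightarrow> PA_prv (Imp h (Ex x a))"
  using ex_intro imp_trans by blast

lemma all_elim_h: "substitutable x u a \<Longrightarrow> PA_prv (Imp h (All x a)) \<Longrightarrow> PA_prv (Imp h (subst x u a))"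
  using ax_inst imp_trans by blast

lemma fresh_ex: "finite (S::nat set) \<Longrightarrow> \<exists>x. x \<notin> S"
  using infinite_UNIV_nat ex_new_if_finite by blast

section \<open>Equality\<close>

lemma eq_sym_imp: "PA_prv (Imp (Eq s t) (Eq t s))"
proof -
  obtain x where x: "x \<notin> vars_tm s" using fresh_ex finite_vars_tm by blast
  have "PA_prv (Imp (Eq s t) (Imp (subst x s (Eq (Var x) s)) (subst x t (Eq (Var x) s))))"
    by (rule ax_eqsub) simp_all
  then have "PA_prv (Imp (Eq s t) (Imp (Eq s s) (Eq t s)))" using x by simp
  with ax_refl[of s] show ?thesis by (rule T2[rotated]) (auto simp: tautology_def)
qed

lemma eq_trans_imp: "PA_prv (Imp (Eq s t) (Imp (Eq t r) (Eq s r)))"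
proof -
  obtain x where x: "x \<notin> vars_tm s" using fresh_ex finite_vars_tm by blast
  have "PA_prv (Imp (Eq t r) (Imp (subst x t (Eq s (Var x))) (subst x r (Eq s (Var x)))))"
    by (rule ax_eqsub) simp_all
  then have "PA_prv (Imp (Eq t r) (Imp (Eq s t) (Eq s r)))" using x by simp
  then show ?thesis by (rule T1[rotated]) (auto simp: tautology_def)
qed

lemma cong_imp: "x \<notin> vars_tm s \<Longrightarrow> PA_prv (Imp (Eq s t) (Eq (subst_tm x s c) (subst_tm x t c)))"
proof -
  assume x: "x \<notin> vars_tm s"
  have nx: "x \<notin> vars_tm (subst_tm x s c)" using vars_subst_tm[of x s c] x by auto
  have "PA_prv (Imp (Eq s t) (Imp (subst x s (Eq (subst_tm x s c) c)) (subst x t (Eq (subst_tm x s c) c))))"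
    by (rule ax_eqsub) simp_all
  then have "PA_prv (Imp (Eq s t) (Imp (Eq (subst_tm x s c) (subst_tm x s c)) (Eq (subst_tm x s c) (subst_tm x t c))))"
    using nx by simp
  with ax_refl show ?thesis by (rule T2[rotated]) (auto simp: tautology_def)
qed

lemma eq_sym_h: "PA_prv (Imp h (Eq s t)) \<Longrightarrow> PA_prv (Imp h (Eq t s))"
  using imp_trans eq_sym_imp by blast

lemma eq_trans_h: "PA_prv (Imp h (Eq s t)) \<Longrightarrow> PA_prv (Imp h (Eq t r)) \<Longrightarrow> PA_prv (Imp h (Eq s r))"
  using hmp[OF hmp[OF hI[OF eq_trans_imp]]] by blast

lemma eq_sym: "PA_prv (Eq s t) \<Longrightarrow> PA_prv (Eq t s)"
  using mp eq_sym_imp by blast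

lemma eq_trans: "PA_prv (Eq s t) \<Longrightarrow> PA_prv (Eq t r) \<Longrightarrow> PA_prv (Eq s r)"
  using mp eq_trans_imp by blast

lemma cong_Succ_h: "PA_prv (Imp h (Eq s t)) \<Longrightarrow> PA_prv (Imp h (Eq (Succ s) (Succ t)))"
proof -
  obtain x where x: "x \<notin> vars_tm s" using fresh_ex finite_vars_tm by blast
  have "PA_prv (Imp (Eq s t) (Eq (subst_tm x s (Succ (Var x))) (subst_tm x t (Succ (Var x)))))"
    using x by (rule cong_imp)
  then have "PA_prv (Imp (Eq s t) (Eq (Succ s) (Succ t)))" by simp
  then show "PA_prv (Imp h (Eq s t)) \<Longrightarrow> ?thesis" using imp_trans by blast
qed

lemma cong_PlusL_h: "PA_prv (Imp h (Eq s t)) \<Longrightarrow> PA_prv (Imp h (Eq (Plus s r) (Plus t r)))"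
proof -
  obtain x where x: "x \<notin> vars_tm s \<union> vars_tm r" using fresh_ex finite_vars_tm finite_UnI by metis
  have "PA_prv (Imp (Eq s t) (Eq (subst_tm x s (Plus (Var x) r)) (subst_tm x t (Plus (Var x) r))))"
    using x by (intro cong_imp) simp
  then have "PA_prv (Imp (Eq s t) (Eq (Plus s r) (Plus t r)))" using x by simp
  then show "PA_prv (Imp h (Eq s t)) \<Longrightarrow> ?thesis" using imp_trans by blast
qed

lemma cong_PlusR_h: "PA_prv (Imp h (Eq s t)) \<Longrightarrow> PA_prv (Imp h (Eq (Plus r s) (Plus r t)))"
proof -
  obtain x where x: "x \<notin> vars_tm s \<union> vars_tm r" using fresh_ex finite_vars_tm finite_UnI by metis
  have "PA_prv (Imp (Eq s t) (Eq (subst_tm x s (Plus r (Var x))) (subst_tm x t (Plus r (Var x)))))"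
    using x by (intro cong_imp) simp
  then have "PA_prv (Imp (Eq s t) (Eq (Plus r s) (Plus r t)))" using x by simp
  then show "PA_prv (Imp h (Eq s t)) \<Longrightarrow> ?thesis" using imp_trans by blast
qed

lemma cong_TimesL_h: "PA_prv (Imp h (Eq s t)) \<Longrightarrow> PA_prv (Imp h (Eq (Times s r) (Times t r)))"
proof -
  obtain x where x: "x \<notin> vars_tm s \<union> vars_tm r" using fresh_ex finite_vars_tm finite_UnI by metis
  have "PA_prv (Imp (Eq s t) (Eq (subst_tm x s (Times (Var x) r)) (subst_tm x t (Times (Var x) r))))"
    using x by (intro cong_imp) simp
  then have "PA_prv (Imp (Eq s t) (Eq (Times s r) (Times t r)))" using x by simp
  then show "PA_prv (Imp h (Eq s t)) \<Longrightarrow> ?thesis" using imp_trans by blast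
qed

lemma cong_TimesR_h: "PA_prv (Imp h (Eq s t)) \<Longrightarrow> PA_prv (Imp h (Eq (Times r s) (Times r t)))"
proof -
  obtain x where x: "x \<notin> vars_tm s \<union> vars_tm r" using fresh_ex finite_vars_tm finite_UnI by metis
  have "PA_prv (Imp (Eq s t) (Eq (subst_tm x s (Times r (Var x))) (subst_tm x t (Times r (Var x)))))"
    using x by (intro cong_imp) simp
  then have "PA_prv (Imp (Eq s t) (Eq (Times r s) (Times r t)))" using x by simp
  then show "PA_prv (Imp h (Eq s t)) \<Longrightarrow> ?thesis" using imp_trans by blast
qed

lemma unh: "PA_prv (Imp (Eq Zero Zero) a) \<Longrightarrow> PA_prv a"
  using mp ax_refl by blast

lemma toh: "PA_prv a \<Longrightarrow> PA_prv (Imp (Eq Zero Zero) a)"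
  by (rule hI)

lemma eqsub_h: "PA_prv (Imp h (Eq s t)) \<Longrightarrow> PA_prv (Imp h (subst x s a)) \<Longrightarrow>
   substitutable x s a \<Longrightarrow> substitutable x t a \<Longrightarrow> PA_prv (Imp h (subst x t a))"
  using hmp[OF hmp[OF hI[OF ax_eqsub]]] by blast



section \<open>Arithmetic in PA\<close>

lemma cong_Succ: "PA_prv (Eq s t) \<Longrightarrow> PA_prv (Eq (Succ s) (Succ t))"
  by (rule unh, rule cong_Succ_h, rule toh)
lemma cong_Plus: "PA_prv (Eq s t) \<Longrightarrow> PA_prv (Eq s' t') \<Longrightarrow> PA_prv (Eq (Plus s s') (Plus t t'))"
proof -
  assume a: "PA_prv (Eq s t)" "PA_prv (Eq s' t')"
  have "PA_prv (Eq (Plus s s') (Plus t s'))" by (rule unh, rule cong_PlusL_h, rule toh, rule a(1))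
  moreover have "PA_prv (Eq (Plus t s') (Plus t t'))" by (rule unh, rule cong_PlusR_h, rule toh, rule a(2))
  ultimately show ?thesis by (rule eq_trans)
qed
lemma cong_Times: "PA_prv (Eq s t) \<Longrightarrow> PA_prv (Eq s' t') \<Longrightarrow> PA_prv (Eq (Times s s') (Times t t'))"
proof -
  assume a: "PA_prv (Eq s t)" "PA_prv (Eq s' t')"
  have "PA_prv (Eq (Times s s') (Times t s'))" by (rule unh, rule cong_TimesL_h, rule toh, rule a(1))
  moreover have "PA_prv (Eq (Times t s') (Times t t'))" by (rule unh, rule cong_TimesR_h, rule toh, rule a(2))
  ultimately show ?thesis by (rule eq_trans)
qed

lemma ax_sne0: "PA_prv (Neg (Eq (Succ t) Zero))"
proof -
  have "PA_prv (subst 0 t (Neg (Eq (Succ (Var 0)) Zero)))"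
    by (rule inst[OF ax_PA[OF PA_axiom.succ_ne_zero]]) simp
  then show ?thesis by simp
qed

lemma ax_plus0: "PA_prv (Eq (Plus t Zero) t)"
proof -
  have "PA_prv (subst 0 t (Eq (Plus (Var 0) Zero) (Var 0)))"
    by (rule inst[OF ax_PA[OF PA_axiom.plus_zero]]) simp
  then show ?thesis by simp
qed

lemma ax_times0: "PA_prv (Eq (Times t Zero) Zero)"
proof -
  have "PA_prv (subst 0 t (Eq (Times (Var 0) Zero) Zero))"
    by (rule inst[OF ax_PA[OF PA_axiom.times_zero]]) simp
  then show ?thesis by simp
qed

lemma fresh3: "\<exists>k. k \<notin> vars_tm s \<and> k \<noteq> 0 \<and> k \<noteq> (1::nat)"
proof -
  have "finite (vars_tm s \<union> {0,1})" by simp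
  then obtain k where "k \<notin> vars_tm s \<union> {0,1}" using fresh_ex by blast
  then show ?thesis by auto
qed

lemma ax_plusS: "PA_prv (Eq (Plus s (Succ t)) (Succ (Plus s t)))"
proof -
  obtain k where k: "k \<notin> vars_tm s" "k \<noteq> 0" "k \<noteq> 1" using fresh3 by blast
  let ?A = "Eq (Plus (Var 0) (Succ (Var 1))) (Succ (Plus (Var 0) (Var 1)))"
  have "PA_prv ?A" by (rule ax_PA) (rule PA_axiom.plus_succ)
  then have "PA_prv (subst 1 (Var k) ?A)" by (rule inst) simp
  then have "PA_prv (subst 0 s (subst 1 (Var k) ?A))" by (rule inst) simp
  then have "PA_prv (subst k t (subst 0 s (subst 1 (Var k) ?A)))" by (rule inst) simp
  then show ?thesis using k by simp
qed

lemma ax_timesS: "PA_prv (Eq (Times s (Succ t)) (Plus (Times s t) s))"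
proof -
  obtain k where k: "k \<notin> vars_tm s" "k \<noteq> 0" "k \<noteq> 1" using fresh3 by blast
  let ?A = "Eq (Times (Var 0) (Succ (Var 1))) (Plus (Times (Var 0) (Var 1)) (Var 0))"
  have "PA_prv ?A" by (rule ax_PA) (rule PA_axiom.times_succ)
  then have "PA_prv (subst 1 (Var k) ?A)" by (rule inst) simp
  then have "PA_prv (subst 0 s (subst 1 (Var k) ?A))" by (rule inst) simp
  then have "PA_prv (subst k t (subst 0 s (subst 1 (Var k) ?A)))" by (rule inst) simp
  then show ?thesis using k by simp
qed

lemma ax_sinj: "PA_prv (Imp (Eq (Succ s) (Succ t)) (Eq s t))"
proof -
  obtain k where k: "k \<notin> vars_tm s" "k \<noteq> 0" "k \<noteq> 1" using fresh3 by blast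
  let ?A = "Imp (Eq (Succ (Var 0)) (Succ (Var 1))) (Eq (Var 0) (Var 1))"
  have "PA_prv ?A" by (rule ax_PA) (rule PA_axiom.succ_inj)
  then have "PA_prv (subst 1 (Var k) ?A)" by (rule inst) simp
  then have "PA_prv (subst 0 s (subst 1 (Var k) ?A))" by (rule inst) simp
  then have "PA_prv (subst k t (subst 0 s (subst 1 (Var k) ?A)))" by (rule inst) simp
  then show ?thesis using k by simp
qed

lemma sinj_h: "PA_prv (Imp h (Eq (Succ s) (Succ t))) \<Longrightarrow> PA_prv (Imp h (Eq s t))"
  by (rule imp_trans[OF _ ax_sinj])

primrec Sn :: "nat \<Rightarrow> tm \<Rightarrow> tm" where
  "Sn 0 t = t"
| "Sn (Suc n) t = Succ (Sn n t)"

lemma Sn_num: "Sn n (num m) = num (m + n)"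
  by (induct n) auto

lemma plus_num: "PA_prv (Eq (Plus t (num n)) (Sn n t))"
proof (induct n)
  case 0 then show ?case using ax_plus0 by simp
next
  case (Suc n)
  have a: "PA_prv (Eq (Plus t (Succ (num n))) (Succ (Plus t (num n))))" by (rule ax_plusS)
  have b: "PA_prv (Eq (Succ (Plus t (num n))) (Succ (Sn n t)))" using Suc by (rule cong_Succ)
  show ?case using eq_trans[OF a b] by simp
qed

lemma num_plus: "PA_prv (Eq (Plus (num m) (num n)) (num (m + n)))"
  using plus_num[of "num m" n] by (simp add: Sn_num)

lemma num_times: "PA_prv (Eq (Times (num m) (num n)) (num (m * n)))"
proof (induct n)
  case 0 then show ?case using ax_times0 by simp
next
  case (Suc n)
  have a: "PA_prv (Eq (Times (num m) (Succ (num n))) (Plus (Times (num m) (num n)) (num m)))" by (rule ax_timesS)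
  have b: "PA_prv (Eq (Plus (Times (num m) (num n)) (num m)) (Plus (num (m*n)) (num m)))"
    using Suc ax_refl by (rule cong_Plus)
  have c: "PA_prv (Eq (Plus (num (m*n)) (num m)) (num (m * Suc n)))"
    using num_plus[of "m*n" m] by (simp add: add.commute)
  show ?case using eq_trans[OF eq_trans[OF a b] c] by simp
qed

lemma closed_eval: "vars_tm t = {} \<Longrightarrow> PA_prv (Eq t (num (ev_tm e t)))"
proof (induct t)
  case Zero then show ?case using ax_refl by simp
next
  case (Var x) then show ?case by simp
next
  case (Succ t) then show ?case using cong_Succ by simp
next
  case (Plus s t)
  then have "PA_prv (Eq (Plus s t) (Plus (num (ev_tm e s)) (num (ev_tm e t))))" using cong_Plus by simp
  then show ?case using eq_trans[OF _ num_plus] by simp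
next
  case (Times s t)
  then have "PA_prv (Eq (Times s t) (Times (num (ev_tm e s)) (num (ev_tm e t))))" using cong_Times by simp
  then show ?case using eq_trans[OF _ num_times] by simp
qed

lemma num_neq: "m \<noteq> n \<Longrightarrow> PA_prv (Neg (Eq (num m) (num n)))"
proof (induct m arbitrary: n)
  case 0
  then obtain n' where n: "n = Suc n'" by (cases n) auto
  have "PA_prv (Neg (Eq Zero (Succ (num n'))))"
    using eq_sym_imp[of Zero "Succ (num n')"] ax_sne0[of "num n'"] by (rule TT2) (auto simp: tautology_def)
  then show ?case using n by simp
next
  case (Suc m)
  show ?case
  proof (cases n)
    case 0 then show ?thesis using ax_sne0 by simp
  next
    case (Suc n')
    then have "PA_prv (Neg (Eq (num m) (num n')))" using Suc.hyps Suc.prems by simp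
    with ax_sinj[of "num m" "num n'"] have "PA_prv (Neg (Eq (Succ (num m)) (Succ (num n'))))"
      by (rule TT2) (auto simp: tautology_def)
    then show ?thesis using Suc by simp
  qed
qed

lemma induct_rule:
  assumes "PA_prv (subst z Zero A)" "PA_prv (Imp A (subst z (Succ (Var z)) A))"
  shows "PA_prv A"
proof -
  have ax: "PA_prv (Imp (Conj (subst z Zero A) (All z (Imp A (subst z (Succ (Var z)) A)))) (All z A))"
    by (rule ax_PA) (rule PA_axiom.induction)
  have "PA_prv (All z (Imp A (subst z (Succ (Var z)) A)))" using assms(2) by (rule gen)
  with assms(1) have "PA_prv (Conj (subst z Zero A) (All z (Imp A (subst z (Succ (Var z)) A))))"
    by (rule TT2) (auto simp: tautology_def)
  then have "PA_prv (All z A)" using ax by (rule mp[rotated])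
  then have "PA_prv (subst z (Var z) A)" by (rule all_elim) simp
  then show ?thesis by simp
qed

lemma zero_or_succ: assumes yz: "y \<noteq> z" shows "PA_prv (Disj (Eq (Var z) Zero) (Ex y (Eq (Var z) (Succ (Var y)))))"
proof (rule induct_rule[where z = z])
  show "PA_prv (subst z Zero (Disj (Eq (Var z) Zero) (Ex y (Eq (Var z) (Succ (Var y))))))"
    using ax_refl[of Zero] by (rule TT1) (auto simp: tautology_def yz)
  have "PA_prv (Imp (subst y (Var z) (Eq (Succ (Var z)) (Succ (Var y)))) (Ex y (Eq (Succ (Var z)) (Succ (Var y)))))"
    by (rule ex_intro) simp
  then have "PA_prv (Ex y (Eq (Succ (Var z)) (Succ (Var y))))" using yz ax_refl mp by simp
  then show "PA_prv (Imp (Disj (Eq (Var z) Zero) (Ex y (Eq (Var z) (Succ (Var y)))))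
     (subst z (Succ (Var z)) (Disj (Eq (Var z) Zero) (Ex y (Eq (Var z) (Succ (Var y)))))))"
    by (rule TT1) (auto simp: tautology_def yz)
qed

lemma cases_var:
  assumes "y \<noteq> z" "y \<notin> fv B" "PA_prv (Imp (Eq (Var z) Zero) B)"
    "PA_prv (Imp (Eq (Var z) (Succ (Var y))) B)"
  shows "PA_prv B"
proof -
  have "PA_prv (Imp (Ex y (Eq (Var z) (Succ (Var y)))) B)" using assms(4,2) by (rule ex_elim)
  with zero_or_succ[OF assms(1)] assms(3) show ?thesis
    by (rule TT3) (auto simp: tautology_def)
qed

lemma L1: "PA_prv (Eq (Plus Zero t) t)"
proof -
  let ?A = "Eq (Plus Zero (Var 0)) (Var 0)"
  have "PA_prv ?A"
  proof (rule induct_rule[where z = 0])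
    show "PA_prv (subst 0 Zero ?A)" using ax_plus0 by simp
    have a: "PA_prv (Imp ?A (Eq (Plus Zero (Succ (Var 0))) (Succ (Plus Zero (Var 0)))))" by (rule hI, rule ax_plusS)
    have b: "PA_prv (Imp ?A (Eq (Succ (Plus Zero (Var 0))) (Succ (Var 0))))" by (rule cong_Succ_h, rule hyp)
    show "PA_prv (Imp ?A (subst 0 (Succ (Var 0)) ?A))" using eq_trans_h[OF a b] by simp
  qed
  then have "PA_prv (subst 0 t ?A)" by (rule inst) simp
  then show ?thesis by simp
qed

lemma L2: "PA_prv (Eq (Plus (Succ s) t) (Succ (Plus s t)))"
proof -
  obtain z where z: "z \<notin> vars_tm s" using fresh_ex finite_vars_tm by blast
  let ?A = "Eq (Plus (Succ s) (Var z)) (Succ (Plus s (Var z)))"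
  have "PA_prv ?A"
  proof (rule induct_rule[where z = z])
    have a: "PA_prv (Eq (Plus (Succ s) Zero) (Succ s))" by (rule ax_plus0)
    have b: "PA_prv (Eq (Succ s) (Succ (Plus s Zero)))" by (rule eq_sym, rule cong_Succ, rule ax_plus0)
    show "PA_prv (subst z Zero ?A)" using z eq_trans[OF a b] by simp
    have c: "PA_prv (Imp ?A (Eq (Plus (Succ s) (Succ (Var z))) (Succ (Plus (Succ s) (Var z)))))" by (rule hI, rule ax_plusS)
    have d: "PA_prv (Imp ?A (Eq (Succ (Plus (Succ s) (Var z))) (Succ (Succ (Plus s (Var z))))))" by (rule cong_Succ_h, rule hyp)
    have e: "PA_prv (Imp ?A (Eq (Succ (Succ (Plus s (Var z)))) (Succ (Plus s (Succ (Var z))))))"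
      by (rule hI, rule eq_sym, rule cong_Succ, rule ax_plusS)
    show "PA_prv (Imp ?A (subst z (Succ (Var z)) ?A))" using z eq_trans_h[OF eq_trans_h[OF c d] e] by simp
  qed
  then have "PA_prv (subst z t ?A)" by (rule inst) simp
  then show ?thesis using z by simp
qed



abbreviation lt :: "nat \<Rightarrow> tm \<Rightarrow> tm \<Rightarrow> fm" where
  "lt k s t \<equiv> Ex k (Eq (Plus s (Succ (Var k))) t)"

lemma hconj1: "PA_prv (Imp (Conj h e) h)"
  by (rule ax_taut) (auto simp: tautology_def)
lemma hconj2: "PA_prv (Imp (Conj h e) e)"
  by (rule ax_taut) (auto simp: tautology_def)
lemma curry: assumes "PA_prv (Imp (Conj h e) b)" shows "PA_prv (Imp h (Imp e b))"
  using assms by (rule TT1) (auto simp: tautology_def)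
lemma negimp: assumes "PA_prv (Neg e)" shows "PA_prv (Imp e b)"
  using assms by (rule TT1) (auto simp: tautology_def)

lemma enum_plus_step:
  assumes z: "z \<notin> vars_tm t" "z \<notin> fv B"
  and base: "PA_prv (Imp (Eq t (num n)) B)"
  and sc: "\<And>y. y \<notin> vars_tm t \<Longrightarrow> y \<notin> fv B \<Longrightarrow> PA_prv (Imp (Eq (Succ (Plus t (Var y))) (num n)) B)"
  shows "PA_prv (Imp (Eq (Plus t (Var z)) (num n)) B)"
proof -
  have "finite (vars_tm t \<union> fv B \<union> {z})" by simp
  from fresh_ex[OF this] obtain y where y: "y \<notin> vars_tm t \<union> fv B \<union> {z}" ..
  let ?E = "Eq (Plus t (Var z)) (num n)"
  show ?thesis
  proof (rule cases_var[of y z])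
    show "y \<noteq> z" using y by auto
    show "y \<notin> fv (Imp ?E B)" using y by auto
    let ?h = "Conj (Eq (Var z) Zero) ?E"
    have 1: "PA_prv (Imp ?h (Eq (Var z) Zero))" by (rule hconj1)
    have 2: "PA_prv (Imp ?h (Eq (Plus t (Var z)) (Plus t Zero)))" using 1 by (rule cong_PlusR_h)
    have 3: "PA_prv (Imp ?h (Eq (Plus t Zero) t))" by (rule hI, rule ax_plus0)
    have 4: "PA_prv (Imp ?h ?E)" by (rule hconj2)
    have 5: "PA_prv (Imp ?h (Eq t (num n)))" by (rule eq_trans_h[OF eq_sym_h[OF eq_trans_h[OF 2 3]] 4])
    show "PA_prv (Imp (Eq (Var z) Zero) (Imp ?E B))" by (rule curry, rule imp_trans[OF 5 base])
  next
    let ?h = "Conj (Eq (Var z) (Succ (Var y))) ?E"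
    have 1: "PA_prv (Imp ?h (Eq (Var z) (Succ (Var y))))" by (rule hconj1)
    have 2: "PA_prv (Imp ?h (Eq (Plus t (Var z)) (Plus t (Succ (Var y)))))" using 1 by (rule cong_PlusR_h)
    have 3: "PA_prv (Imp ?h (Eq (Plus t (Succ (Var y))) (Succ (Plus t (Var y)))))" by (rule hI, rule ax_plusS)
    have 4: "PA_prv (Imp ?h ?E)" by (rule hconj2)
    have 5: "PA_prv (Imp ?h (Eq (Succ (Plus t (Var y))) (num n)))"
      by (rule eq_trans_h[OF eq_sym_h[OF eq_trans_h[OF 2 3]] 4])
    have 6: "PA_prv (Imp (Eq (Succ (Plus t (Var y))) (num n)) B)" using y by (intro sc) auto
    show "PA_prv (Imp (Eq (Var z) (Succ (Var y))) (Imp ?E B))" by (rule curry, rule imp_trans[OF 5 6])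
  qed
qed

lemma enum_plus:
  "z \<notin> vars_tm t \<Longrightarrow> z \<notin> fv B \<Longrightarrow> (\<And>j. j \<le> n \<Longrightarrow> PA_prv (Imp (Eq t (num j)) B)) \<Longrightarrow>
   PA_prv (Imp (Eq (Plus t (Var z)) (num n)) B)"
proof (induct n arbitrary: z)
  case 0
  show ?case
  proof (rule enum_plus_step)
    show "PA_prv (Imp (Eq t (num 0)) B)" using 0 by simp
    show "PA_prv (Imp (Eq (Succ (Plus t (Var y))) (num 0)) B)" for y
      using ax_sne0 by simp (rule negimp)
  qed (simp_all add: 0(1,2))
next
  case (Suc n)
  show ?case
  proof (rule enum_plus_step)
    show "PA_prv (Imp (Eq t (num (Suc n))) B)" using Suc.prems(3)[OF le_refl] .
    show "PA_prv (Imp (Eq (Succ (Plus t (Var y))) (num (Suc n))) B)"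
      if "y \<notin> vars_tm t" "y \<notin> fv B" for y
    proof -
      have "PA_prv (Imp (Eq (Plus t (Var y)) (num n)) B)"
        by (rule Suc.hyps) (use that in simp_all, rule Suc.prems(3), simp)
      then show ?thesis by (simp add: imp_trans[OF ax_sinj])
    qed
  qed (simp_all add: Suc.prems(1,2))
qed

lemma enum_lt:
  assumes k: "k \<notin> vars_tm t" "k \<notin> fv B"
    and h: "\<And>j. j < n \<Longrightarrow> PA_prv (Imp (Eq t (num j)) B)"
  shows "PA_prv (Imp (lt k t (num n)) B)"
proof (rule ex_elim[OF _ k(2)])
  let ?h = "Eq (Plus t (Succ (Var k))) (num n)"
  have 1: "PA_prv (Imp ?h (Eq (Succ (Plus t (Var k))) (num n)))"
    by (rule eq_trans_h[OF eq_sym_h[OF hI[OF ax_plusS]] hyp])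
  show "PA_prv (Imp ?h B)"
  proof (cases n)
    case 0
    have "PA_prv (Imp (Eq (Succ (Plus t (Var k))) (num n)) B)" using 0 ax_sne0 by simp (rule negimp)
    then show ?thesis by (rule imp_trans[OF 1])
  next
    case (Suc m)
    have 2: "PA_prv (Imp ?h (Eq (Plus t (Var k)) (num m)))" using 1 Suc by (simp add: sinj_h)
    have "PA_prv (Imp (Eq (Plus t (Var k)) (num m)) B)"
      by (rule enum_plus[OF k]) (rule h, simp add: Suc)
    then show ?thesis by (rule imp_trans[OF 2])
  qed
qed

lemma lt_true: "m < n \<Longrightarrow> PA_prv (lt k (num m) (num n))"
proof -
  assume mn: "m < n"
  define d where "d = n - m - 1"
  have n: "n = m + Suc d" using mn d_def by simp
  have "PA_prv (Imp (subst k (num d) (Eq (Plus (num m) (Succ (Var k))) (num n))) (lt k (num m) (num n)))"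
    by (rule ex_intro) simp
  moreover have "PA_prv (subst k (num d) (Eq (Plus (num m) (Succ (Var k))) (num n)))"
    using num_plus[of m "Suc d"] n by simp
  ultimately show ?thesis by (rule mp)
qed

definition Bot :: fm where "Bot = Neg (Eq Zero Zero)"

lemma fv_Bot[simp]: "fv Bot = {}" by (simp add: Bot_def)

lemma Bot_neg: assumes "PA_prv (Imp a Bot)" shows "PA_prv (Neg a)"
  using assms ax_refl[of Zero] by (rule TT2) (auto simp: tautology_def Bot_def)

lemma neg_Bot: assumes "PA_prv (Neg a)" shows "PA_prv (Imp a Bot)"
  using assms by (rule TT1) (auto simp: tautology_def Bot_def)

lemma lt_false: "n \<le> m \<Longrightarrow> PA_prv (Neg (lt k (num m) (num n)))"
proof -
  assume nm: "n \<le> m"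
  have "PA_prv (Imp (lt k (num m) (num n)) Bot)"
  proof (rule enum_lt)
    fix j assume "j < n"
    then have "m \<noteq> j" using nm by simp
    then show "PA_prv (Imp (Eq (num m) (num j)) Bot)" by (intro neg_Bot num_neq)
  qed simp_all
  then show ?thesis by (rule Bot_neg)
qed



lemma TT4: "PA_prv a \<Longrightarrow> PA_prv b \<Longrightarrow> PA_prv c \<Longrightarrow> PA_prv d \<Longrightarrow> tautology (Imp a (Imp b (Imp c (Imp d f)))) \<Longrightarrow> PA_prv f"
  using mp ax_taut by blast

lemma fresh2: "\<exists>y::nat. y \<noteq> a \<and> y \<noteq> b"
proof -
  from fresh_ex[of "{a,b}"] obtain y where "y \<notin> {a,b}" by auto
  then show ?thesis by auto
qed

lemma lt_cong:
  assumes "PA_prv (Eq s s')" "PA_prv (Eq t t')"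
    "k \<notin> vars_tm s" "k \<notin> vars_tm t" "k \<notin> vars_tm s'" "k \<notin> vars_tm t'"
  shows "PA_prv (Imp (lt k s' t') (lt k s t))"
proof (rule ex_elim)
  let ?B = "Eq (Plus s' (Succ (Var k))) t'"
  have 1: "PA_prv (Imp ?B (Eq (Plus s (Succ (Var k))) (Plus s' (Succ (Var k)))))"
    by (rule cong_PlusL_h, rule hI, rule assms(1))
  have 2: "PA_prv (Imp ?B (Eq (Plus s (Succ (Var k))) t))"
    by (rule eq_trans_h[OF eq_trans_h[OF 1 hyp] hI[OF eq_sym[OF assms(2)]]])
  show "PA_prv (Imp ?B (lt k s t))"
    by (rule ex_intro_h[where u = "Var k"]) (simp_all add: 2)
  show "k \<notin> fv (lt k s t)" by simp
qed

lemma trich: assumes kw: "k \<noteq> w"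
  shows "PA_prv (Disj (lt k (Var w) (num K)) (Disj (Eq (Var w) (num K)) (lt k (num K) (Var w))))"
proof (induct K)
  case 0
  obtain y where y: "y \<noteq> w" "y \<noteq> k" using fresh2 by blast
  let ?T = "Disj (lt k (Var w) Zero) (Disj (Eq (Var w) Zero) (lt k Zero (Var w)))"
  have "PA_prv ?T"
  proof (rule cases_var[of y w])
    show "y \<noteq> w" by (rule y)
    show "y \<notin> fv ?T" using y by auto
    show "PA_prv (Imp (Eq (Var w) Zero) ?T)"
      using hyp[of "Eq (Var w) Zero"] by (rule TT1) (auto simp: tautology_def)
    let ?h = "Eq (Var w) (Succ (Var y))"
    have e: "PA_prv (Imp ?h (Eq (Plus Zero (Succ (Var y))) (Var w)))"
      by (rule eq_trans_h[OF hI[OF L1] eq_sym_h[OF hyp]])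
    have "PA_prv (Imp ?h (lt k Zero (Var w)))"
      by (rule ex_intro_h[where u = "Var y"]) (use e kw in simp_all)
    then show "PA_prv (Imp ?h ?T)" by (rule TT1) (auto simp: tautology_def)
  qed
  then show ?case by simp
next
  case (Suc K)
  let ?T = "Disj (lt k (Var w) (num (Suc K))) (Disj (Eq (Var w) (num (Suc K))) (lt k (num (Suc K)) (Var w)))"
  have a: "PA_prv (Imp (lt k (Var w) (num K)) (lt k (Var w) (num (Suc K))))"
  proof (rule ex_elim)
    let ?B = "Eq (Plus (Var w) (Succ (Var k))) (num K)"
    have e: "PA_prv (Imp ?B (Eq (Plus (Var w) (Succ (Succ (Var k)))) (Succ (num K))))"
      by (rule eq_trans_h[OF hI[OF ax_plusS] cong_Succ_h[OF hyp]])
    show "PA_prv (Imp ?B (lt k (Var w) (num (Suc K))))"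
      by (rule ex_intro_h[where u = "Succ (Var k)"]) (use e kw in simp_all)
  qed simp
  have b: "PA_prv (Imp (Eq (Var w) (num K)) (lt k (Var w) (num (Suc K))))"
  proof -
    let ?h = "Eq (Var w) (num K)"
    have e: "PA_prv (Imp ?h (Eq (Plus (Var w) (Succ Zero)) (Succ (num K))))"
      by (rule eq_trans_h[OF eq_trans_h[OF hI[OF ax_plusS] hI[OF cong_Succ[OF ax_plus0]]] cong_Succ_h[OF hyp]])
    show ?thesis
      by (rule ex_intro_h[where u = "Zero"]) (use e kw in simp_all)
  qed
  obtain y where y: "y \<noteq> w" "y \<noteq> k" using fresh2 by blast
  let ?T2 = "Disj (Eq (Var w) (num (Suc K))) (lt k (num (Suc K)) (Var w))"
  have c: "PA_prv (Imp (lt k (num K) (Var w)) ?T2)"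
  proof (rule ex_elim)
    let ?B = "Eq (Plus (num K) (Succ (Var k))) (Var w)"
    show "PA_prv (Imp ?B ?T2)"
    proof (rule cases_var[of y k])
      show "y \<noteq> k" by (rule y)
      show "y \<notin> fv (Imp ?B ?T2)" using y by auto
      let ?h = "Conj (Eq (Var k) Zero) ?B"
      have 1: "PA_prv (Imp ?h (Eq (Var w) (Plus (num K) (Succ (Var k)))))" by (rule eq_sym_h, rule hconj2)
      have 2: "PA_prv (Imp ?h (Eq (Plus (num K) (Succ (Var k))) (Plus (num K) (Succ Zero))))"
        by (rule cong_PlusR_h, rule cong_Succ_h, rule hconj1)
      have 3: "PA_prv (Imp ?h (Eq (Plus (num K) (Succ Zero)) (Succ (num K))))"
        by (rule eq_trans_h[OF hI[OF ax_plusS] hI[OF cong_Succ[OF ax_plus0]]])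
      have "PA_prv (Imp ?h (Eq (Var w) (num (Suc K))))" using eq_trans_h[OF eq_trans_h[OF 1 2] 3] by simp
      then have "PA_prv (Imp ?h ?T2)" by (rule TT1) (auto simp: tautology_def)
      then show "PA_prv (Imp (Eq (Var k) Zero) (Imp ?B ?T2))" by (rule curry)
    next
      let ?h = "Conj (Eq (Var k) (Succ (Var y))) ?B"
      have 1: "PA_prv (Imp ?h (Eq (Plus (Succ (num K)) (Succ (Var y))) (Succ (Plus (num K) (Succ (Var y))))))"
        by (rule hI, rule L2)
      have 2: "PA_prv (Imp ?h (Eq (Succ (Plus (num K) (Succ (Var y)))) (Plus (num K) (Succ (Succ (Var y))))))"
        by (rule hI, rule eq_sym, rule ax_plusS)
      have 3: "PA_prv (Imp ?h (Eq (Plus (num K) (Succ (Succ (Var y)))) (Plus (num K) (Succ (Var k)))))"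
        by (rule cong_PlusR_h, rule cong_Succ_h, rule eq_sym_h, rule hconj1)
      have 4: "PA_prv (Imp ?h (Eq (Plus (num K) (Succ (Var k))) (Var w)))" by (rule hconj2)
      have e: "PA_prv (Imp ?h (Eq (Plus (Succ (num K)) (Succ (Var y))) (Var w)))"
        by (rule eq_trans_h[OF eq_trans_h[OF eq_trans_h[OF 1 2] 3] 4])
      have "PA_prv (Imp ?h (lt k (num (Suc K)) (Var w)))"
        by (rule ex_intro_h[where u = "Var y"]) (use e y kw in simp_all)
      then have "PA_prv (Imp ?h ?T2)" by (rule TT1) (auto simp: tautology_def)
      then show "PA_prv (Imp (Eq (Var k) (Succ (Var y))) (Imp ?B ?T2))" by (rule curry)
    qed
  qed (use kw in simp)
  from Suc a b c show ?case by (rule TT4) (auto simp: tautology_def)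
qed


section \<open>Bounded formulas\<close>

inductive bd :: "fm \<Rightarrow> bool" where
  bd_eq: "bd (Eq s t)"
| bd_lt: "k \<notin> vars_tm s \<Longrightarrow> k \<notin> vars_tm t \<Longrightarrow> bd (lt k s t)"
| bd_neg: "bd a \<Longrightarrow> bd (Neg a)"
| bd_conj: "bd a \<Longrightarrow> bd b \<Longrightarrow> bd (Conj a b)"
| bd_disj: "bd a \<Longrightarrow> bd b \<Longrightarrow> bd (Disj a b)"
| bd_imp: "bd a \<Longrightarrow> bd b \<Longrightarrow> bd (Imp a b)"
| bd_iff: "bd a \<Longrightarrow> bd b \<Longrightarrow> bd (Iff a b)"
| bd_ball: "bd b \<Longrightarrow> i \<noteq> k \<Longrightarrow> i \<notin> vars_tm t \<Longrightarrow> k \<notin> vars_tm t \<Longrightarrow>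
    bd (All i (Imp (lt k (Var i) t) b))"
| bd_bex: "bd b \<Longrightarrow> i \<noteq> k \<Longrightarrow> i \<notin> vars_tm t \<Longrightarrow> k \<notin> vars_tm t \<Longrightarrow>
    bd (Ex i (Conj (lt k (Var i) t) b))"

lemma bd_subst: "bd a \<Longrightarrow> vars_tm u = {} \<Longrightarrow> bd (subst x u a)"
proof (induct a rule: bd.induct)
  case (bd_lt k s t)
  then show ?case by (cases "k = x") (auto intro!: bd.intros)
next
  case (bd_ball b i k t)
  then show ?case by (cases "i = x"; cases "k = x") (auto intro!: bd.intros)
next
  case (bd_bex b i k t)
  then show ?case by (cases "i = x"; cases "k = x") (auto intro!: bd.intros)
qed (auto intro!: bd.intros)

lemma ev_lt: "k \<notin> vars_tm s \<Longrightarrow> k \<notin> vars_tm t \<Longrightarrow> ev e (lt k s t) = (ev_tm e s < ev_tm e t)"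
proof -
  assume k: "k \<notin> vars_tm s" "k \<notin> vars_tm t"
  have "\<And>j. ev_tm (e(k:=j)) s = ev_tm e s" "\<And>j. ev_tm (e(k:=j)) t = ev_tm e t"
    using k by (auto intro: ev_tm_agree)
  then show ?thesis by (simp add: less_iff_Suc_add) (metis add_Suc_right)
qed

definition lit :: "(nat \<Rightarrow> nat) \<Rightarrow> fm \<Rightarrow> fm" where
  "lit e a = (if ev e a then a else Neg a)"

lemma closed_num_eq: "vars_tm s = {} \<Longrightarrow> PA_prv (Eq s (num (ev_tm e s)))"
  by (rule closed_eval)

lemma bd_complete_eq:
  assumes "vars_tm s = {}" "vars_tm t = {}"
  shows "PA_prv (lit e (Eq s t))"
proof -
  have s: "PA_prv (Eq s (num (ev_tm e s)))" and t: "PA_prv (Eq t (num (ev_tm e t)))"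
    using assms closed_eval by auto
  show ?thesis
  proof (cases "ev_tm e s = ev_tm e t")
    case True
    have t': "PA_prv (Eq t (num (ev_tm e s)))" using t True by simp
    show ?thesis using eq_trans[OF s eq_sym[OF t']] True by (simp add: lit_def)
  next
    case False
    have n: "PA_prv (Neg (Eq (num (ev_tm e s)) (num (ev_tm e t))))" using False by (rule num_neq)
    have "PA_prv (Imp (Eq s t) (Eq (num (ev_tm e s)) (num (ev_tm e t))))"
      by (rule eq_trans_h[OF eq_trans_h[OF hI[OF eq_sym[OF s]] hyp] hI[OF t]])
    with n have "PA_prv (Neg (Eq s t))" by (rule TT2) (auto simp: tautology_def)
    then show ?thesis using False by (simp add: lit_def)
  qed
qed

lemma bd_complete_lt:
  assumes "vars_tm s = {}" "vars_tm t = {}"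
  shows "PA_prv (lit e (lt k s t))"
proof -
  have s: "PA_prv (Eq s (num (ev_tm e s)))" and t: "PA_prv (Eq t (num (ev_tm e t)))"
    using assms closed_eval by auto
  have c1: "PA_prv (Imp (lt k (num (ev_tm e s)) (num (ev_tm e t))) (lt k s t))"
    using lt_cong[OF s t] assms by simp
  have c2: "PA_prv (Imp (lt k s t) (lt k (num (ev_tm e s)) (num (ev_tm e t))))"
    using lt_cong[OF eq_sym[OF s] eq_sym[OF t]] assms by simp
  have ev: "ev e (lt k s t) = (ev_tm e s < ev_tm e t)" by (rule ev_lt) (simp_all add: assms)
  show ?thesis
  proof (cases "ev_tm e s < ev_tm e t")
    case True
    then show ?thesis using mp[OF c1 lt_true[OF True]] ev by (simp add: lit_def)
  next
    case False
    have "PA_prv (Neg (lt k (num (ev_tm e s)) (num (ev_tm e t))))" using False by (intro lt_false) simp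
    with c2 have "PA_prv (Neg (lt k s t))" by (rule TT2) (auto simp: tautology_def)
    then show ?thesis using ev False by (simp add: lit_def)
  qed
qed

lemma lit_neg: assumes "PA_prv (lit e a)" shows "PA_prv (lit e (Neg a))"
proof (cases "ev e a")
  case True
  then have "PA_prv a" using assms by (simp add: lit_def)
  then have "PA_prv (Neg (Neg a))" by (rule TT1) (auto simp: tautology_def)
  then show ?thesis using True by (simp add: lit_def)
next
  case False
  then show ?thesis using assms by (simp add: lit_def)
qed


lemma lit_bin:
  assumes "PA_prv (lit e a)" "PA_prv (lit e b)"
    and "tautology (Imp (lit e a) (Imp (lit e b) (lit e c)))"
  shows "PA_prv (lit e c)"
  using assms by (rule TT2)

lemma bd_complete: "bd a \<Longrightarrow> fv a = {} \<Longrightarrow> PA_prv (lit e a)"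
proof (induct "sz a" arbitrary: a rule: less_induct)
  case less
  from less.prems(1) show ?case
  proof cases
    case (bd_eq s t) then show ?thesis using less.prems(2) unfolding bd_eq(1) by (intro bd_complete_eq) auto
  next
    case (bd_lt k s t) then show ?thesis using less.prems(2) unfolding bd_lt(1) by (intro bd_complete_lt) auto
  next
    case (bd_neg b)
    have "PA_prv (lit e b)" using less bd_neg by auto
    then show ?thesis unfolding bd_neg(1) by (rule lit_neg)
  next
    case (bd_conj b c)
    then have "PA_prv (lit e b)" "PA_prv (lit e c)" using less by auto
    then show ?thesis unfolding bd_conj(1)
      by (rule lit_bin) (cases "ev e b"; cases "ev e c"; auto simp: lit_def tautology_def)
  next
    case (bd_disj b c)
    then have "PA_prv (lit e b)" "PA_prv (lit e c)" using less by auto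
    then show ?thesis unfolding bd_disj(1)
      by (rule lit_bin) (cases "ev e b"; cases "ev e c"; auto simp: lit_def tautology_def)
  next
    case (bd_imp b c)
    then have "PA_prv (lit e b)" "PA_prv (lit e c)" using less by auto
    then show ?thesis unfolding bd_imp(1)
      by (rule lit_bin) (cases "ev e b"; cases "ev e c"; auto simp: lit_def tautology_def)
  next
    case (bd_iff b c)
    then have "PA_prv (lit e b)" "PA_prv (lit e c)" using less by auto
    then show ?thesis unfolding bd_iff(1)
      by (rule lit_bin) (cases "ev e b"; cases "ev e c"; auto simp: lit_def tautology_def)
  next
    case (bd_ball b i k t)
    have fa: "fv a = {}" by (rule less.prems(2))
    have vt: "vars_tm t = {}" using fa bd_ball by auto
    have fb: "fv b \<subseteq> {i}" using fa bd_ball by auto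
    have kb: "k \<notin> fv b" using fb bd_ball by auto
    define n where "n = ev_tm e t"
    have IHj: "PA_prv (lit e (subst i (num j) b))" for j
    proof (rule less.hyps)
      show "sz (subst i (num j) b) < sz a" using bd_ball by simp
      show "bd (subst i (num j) b)" using bd_ball by (intro bd_subst) auto
      show "fv (subst i (num j) b) = {}" using fb by auto
    qed
    have evb: "ev e (subst i (num j) b) = ev (e(i:=j)) b" for j by (simp add: ev_subst)
    have evt: "ev_tm (e(i:=j)) t = n" for j using vt n_def ev_tm_closed by blast
    have evlt: "ev (e(i:=j)) (lt k (Var i) t) = (j < n)" for j
      using ev_lt[of k "Var i" t "e(i:=j)"] bd_ball evt by simp
    have eva: "ev e a = (\<forall>j. j < n \<longrightarrow> ev (e(i:=j)) b)" using bd_ball evlt by simp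
    have tn: "PA_prv (Eq t (num n))" using closed_eval[OF vt] n_def by simp
    show ?thesis
    proof (cases "ev e a")
      case True
      have pj: "PA_prv (subst i (num j) b)" if "j < n" for j
        using IHj[of j] evb[of j] True that eva by (simp add: lit_def)
      have x: "PA_prv (Imp (lt k (Var i) (num n)) b)"
      proof (rule enum_lt)
        fix j assume "j < n"
        show "PA_prv (Imp (Eq (Var i) (num j)) b)"
        proof -
          have h1: "PA_prv (Imp (Eq (Var i) (num j)) (Eq (num j) (Var i)))" by (rule eq_sym_imp)
          have h2: "PA_prv (Imp (Eq (Var i) (num j)) (subst i (num j) b))" by (rule hI, rule pj, fact)
          have "PA_prv (Imp (Eq (Var i) (num j)) (subst i (Var i) b))" by (rule eqsub_h[OF h1 h2]) simp_all
          then show ?thesis by simp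
        qed
      qed (use bd_ball kb in auto)
      have y: "PA_prv (Imp (lt k (Var i) t) (lt k (Var i) (num n)))"
        using lt_cong[OF ax_refl eq_sym[OF tn], of k] bd_ball by simp
      have "PA_prv (Imp (lt k (Var i) t) b)" by (rule imp_trans[OF y x])
      then have "PA_prv a" using bd_ball by (simp add: gen)
      then show ?thesis using True by (simp add: lit_def)
    next
      case False
      then obtain j where j: "j < n" "\<not> ev (e(i:=j)) b" using eva by auto
      have nb: "PA_prv (Neg (subst i (num j) b))" using IHj[of j] evb[of j] j by (simp add: lit_def)
      have l: "PA_prv (lt k (num j) t)"
        using mp[OF lt_cong[OF ax_refl tn, of k] lt_true[OF j(1)]] bd_ball vt by simp
      have ia: "PA_prv (Imp a (Imp (lt k (num j) t) (subst i (num j) b)))"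
        using ax_inst[of i "num j" "Imp (lt k (Var i) t) b"] bd_ball by simp
      from ia l nb have "PA_prv (Neg a)" by (rule TT3) (auto simp: tautology_def)
      then show ?thesis using False by (simp add: lit_def)
    qed
  next
    case (bd_bex b i k t)
    have fa: "fv a = {}" by (rule less.prems(2))
    have vt: "vars_tm t = {}" using fa bd_bex by auto
    have fb: "fv b \<subseteq> {i}" using fa bd_bex by auto
    have kb: "k \<notin> fv b" using fb bd_bex by auto
    define n where "n = ev_tm e t"
    have IHj: "PA_prv (lit e (subst i (num j) b))" for j
    proof (rule less.hyps)
      show "sz (subst i (num j) b) < sz a" using bd_bex by simp
      show "bd (subst i (num j) b)" using bd_bex by (intro bd_subst) auto
      show "fv (subst i (num j) b) = {}" using fb by auto
    qed
    have evb: "ev e (subst i (num j) b) = ev (e(i:=j)) b" for j by (simp add: ev_subst)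
    have evt: "ev_tm (e(i:=j)) t = n" for j using vt n_def ev_tm_closed by blast
    have evlt: "ev (e(i:=j)) (lt k (Var i) t) = (j < n)" for j
      using ev_lt[of k "Var i" t "e(i:=j)"] bd_bex evt by simp
    have eva: "ev e a = (\<exists>j. j < n \<and> ev (e(i:=j)) b)" using bd_bex evlt by simp
    have tn: "PA_prv (Eq t (num n))" using closed_eval[OF vt] n_def by simp
    show ?thesis
    proof (cases "ev e a")
      case True
      then obtain j where j: "j < n" "ev (e(i:=j)) b" using eva by auto
      have pb: "PA_prv (subst i (num j) b)" using IHj[of j] evb[of j] j by (simp add: lit_def)
      have l: "PA_prv (lt k (num j) t)"
        using mp[OF lt_cong[OF ax_refl tn, of k] lt_true[OF j(1)]] bd_bex vt by simp
      have c: "PA_prv (Conj (lt k (num j) t) (subst i (num j) b))"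
        using l pb by (rule TT2) (auto simp: tautology_def)
      have "PA_prv (Imp (subst i (num j) (Conj (lt k (Var i) t) b)) a)"
        using ex_intro[of i "num j" "Conj (lt k (Var i) t) b"] bd_bex by simp
      then have "PA_prv a" using c bd_bex by (simp add: mp)
      then show ?thesis using True by (simp add: lit_def)
    next
      case False
      have nj: "PA_prv (Neg (subst i (num j) b))" if "j < n" for j
        using IHj[of j] evb[of j] False that eva by (simp add: lit_def)
      have x: "PA_prv (Imp (lt k (Var i) (num n)) (Neg b))"
      proof (rule enum_lt)
        fix j assume "j < n"
        show "PA_prv (Imp (Eq (Var i) (num j)) (Neg b))"
        proof -
          have h1: "PA_prv (Imp (Eq (Var i) (num j)) (Eq (num j) (Var i)))" by (rule eq_sym_imp)
          have "PA_prv (subst i (num j) (Neg b))" using nj[OF \<open>j < n\<close>] by simp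
          then have h2: "PA_prv (Imp (Eq (Var i) (num j)) (subst i (num j) (Neg b)))" by (rule hI)
          have "PA_prv (Imp (Eq (Var i) (num j)) (subst i (Var i) (Neg b)))" by (rule eqsub_h[OF h1 h2]) simp_all
          then show ?thesis by simp
        qed
      qed (use bd_bex kb in auto)
      have y: "PA_prv (Imp (lt k (Var i) t) (lt k (Var i) (num n)))"
        using lt_cong[OF ax_refl eq_sym[OF tn], of k] bd_bex by simp
      have "PA_prv (Imp (lt k (Var i) t) (Neg b))" by (rule imp_trans[OF y x])
      then have "PA_prv (Imp (Conj (lt k (Var i) t) b) Bot)" by (rule TT1) (auto simp: tautology_def Bot_def)
      then have "PA_prv (Imp (Ex i (Conj (lt k (Var i) t) b)) Bot)" by (rule ex_elim) simp
      then have "PA_prv (Neg a)" using bd_bex by (simp add: Bot_neg)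
      then show ?thesis using False by (simp add: lit_def)
    qed
  qed
qed

lemma bd_true: "bd a \<Longrightarrow> fv a = {} \<Longrightarrow> ev e a \<Longrightarrow> PA_prv a"
  using bd_complete[of a e] by (simp add: lit_def)

lemma bd_false: "bd a \<Longrightarrow> fv a = {} \<Longrightarrow> \<not> ev e a \<Longrightarrow> PA_prv (Neg a)"
  using bd_complete[of a e] by (simp add: lit_def)



lemma ev_tm_upd[simp]: "x \<notin> vars_tm t \<Longrightarrow> ev_tm (e(x:=v)) t = ev_tm e t"
  by (rule ev_tm_agree) auto

definition bex :: "nat \<Rightarrow> nat \<Rightarrow> tm \<Rightarrow> fm \<Rightarrow> fm" where
  "bex i k t a = Ex i (Conj (lt k (Var i) t) a)"

definition ball :: "nat \<Rightarrow> nat \<Rightarrow> tm \<Rightarrow> fm \<Rightarrow> fm" where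
  "ball i k t a = All i (Imp (lt k (Var i) t) a)"

lemma fv_bex[simp]: "fv (bex i k t a) = ((insert i (vars_tm t) - {k}) \<union> fv a) - {i}"
  by (auto simp: bex_def)

lemma fv_ball[simp]: "fv (ball i k t a) = ((insert i (vars_tm t) - {k}) \<union> fv a) - {i}"
  by (auto simp: ball_def)

lemma bd_bex: "bd a \<Longrightarrow> i \<noteq> k \<Longrightarrow> i \<notin> vars_tm t \<Longrightarrow> k \<notin> vars_tm t \<Longrightarrow> bd (bex i k t a)"
  unfolding bex_def by (rule bd.bd_bex)

lemma bd_ball: "bd a \<Longrightarrow> i \<noteq> k \<Longrightarrow> i \<notin> vars_tm t \<Longrightarrow> k \<notin> vars_tm t \<Longrightarrow> bd (ball i k t a)"
  unfolding ball_def by (rule bd.bd_ball)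

lemma ev_bex[simp]: "i \<noteq> k \<Longrightarrow> i \<notin> vars_tm t \<Longrightarrow> k \<notin> vars_tm t \<Longrightarrow>
  ev e (bex i k t a) = (\<exists>j<ev_tm e t. ev (e(i:=j)) a)"
  unfolding bex_def by (subst ev.simps, subst ev.simps, subst ev_lt) auto

lemma ev_ball[simp]: "i \<noteq> k \<Longrightarrow> i \<notin> vars_tm t \<Longrightarrow> k \<notin> vars_tm t \<Longrightarrow>
  ev e (ball i k t a) = (\<forall>j<ev_tm e t. ev (e(i:=j)) a)"
  unfolding ball_def by (subst ev.simps, subst ev.simps, subst ev_lt) auto

definition PE :: "tm \<Rightarrow> tm \<Rightarrow> tm \<Rightarrow> fm" where
  "PE x y z = Eq (Plus z z) (Plus (Plus (Times (Plus x y) (Succ (Plus x y))) x) x)"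

lemma tri2: "2 * triangle n = n * Suc n"
  by (induct n) (auto simp: algebra_simps)

lemma ev_PE[simp]: "ev e (PE x y z) = (ev_tm e z = prod_encode (ev_tm e x, ev_tm e y))"
proof -
  have "(c + c = (a + b) * Suc (a + b) + a + a) = (c = triangle (a + b) + a)" for a b c :: nat
  proof -
    have "(a + b) * Suc (a + b) = 2 * triangle (a + b)" by (simp only: tri2)
    then show ?thesis by linarith
  qed
  then show ?thesis by (simp add: PE_def prod_encode_def)
qed

lemma fv_PE[simp]: "fv (PE x y z) = vars_tm x \<union> vars_tm y \<union> vars_tm z"
  by (auto simp: PE_def)

lemma bd_PE[simp]: "bd (PE x y z)"
  unfolding PE_def by (rule bd_eq)


lemma ex_add_eq[simp]: "(\<exists>k. (a::nat) + k = b) = (a \<le> b)"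
  by (auto simp: le_iff_add)

definition Beta :: "nat \<Rightarrow> tm \<Rightarrow> tm \<Rightarrow> tm \<Rightarrow> tm \<Rightarrow> fm" where
  "Beta b ta tb ti tr = bex (Suc b) b (Succ ta)
     (Conj (Eq ta (Plus (Times (Var (Suc b)) (Succ (Times tb (Succ ti)))) tr))
           (lt b tr (Succ (Times tb (Succ ti)))))"

lemma divmod_ex: "0 < m \<Longrightarrow> (\<exists>q<Suc a. a = q * m + r \<and> r < m) = (r = a mod m)"
proof
  assume m: "0 < m"
  show "\<exists>q<Suc a. a = q * m + r \<and> r < m \<Longrightarrow> r = a mod m"
  proof -
    assume "\<exists>q<Suc a. a = q * m + r \<and> r < m"
    then obtain q where q: "a = q * m + r" "r < m" by auto
    then show "r = a mod m" by simp
  qed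
  show "r = a mod m \<Longrightarrow> \<exists>q<Suc a. a = q * m + r \<and> r < m"
  proof -
    assume r: "r = a mod m"
    have "a div m < Suc a" by (rule le_imp_less_Suc[OF div_le_dividend])
    moreover have "a = a div m * m + r" using r by simp
    moreover have "r < m" using r m by simp
    ultimately show ?thesis by blast
  qed
qed

lemma ev_Beta[simp]:
  assumes "b \<notin> vars_tm ta \<union> vars_tm tb \<union> vars_tm ti \<union> vars_tm tr"
    "Suc b \<notin> vars_tm ta \<union> vars_tm tb \<union> vars_tm ti \<union> vars_tm tr"
  shows "ev e (Beta b ta tb ti tr) = (ev_tm e tr = ev_tm e ta mod Suc (ev_tm e tb * Suc (ev_tm e ti)))"
proof -
  have "ev e (Beta b ta tb ti tr) = (\<exists>q<Suc (ev_tm e ta). ev_tm e ta = q * Suc (ev_tm e tb * Suc (ev_tm e ti)) + ev_tm e tr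
        \<and> ev_tm e tr < Suc (ev_tm e tb * Suc (ev_tm e ti)))"
    using assms by (simp add: Beta_def ev_lt less_Suc_eq_le)
  also have "\<dots> = (ev_tm e tr = ev_tm e ta mod Suc (ev_tm e tb * Suc (ev_tm e ti)))"
    by (rule divmod_ex) simp
  finally show ?thesis .
qed

lemma fv_Beta[simp]:
  assumes "b \<notin> vars_tm ta \<union> vars_tm tb \<union> vars_tm ti \<union> vars_tm tr"
    "Suc b \<notin> vars_tm ta \<union> vars_tm tb \<union> vars_tm ti \<union> vars_tm tr"
  shows "fv (Beta b ta tb ti tr) = vars_tm ta \<union> vars_tm tb \<union> vars_tm ti \<union> vars_tm tr"
  using assms by (auto simp: Beta_def)

lemma bd_Beta:
  assumes "b \<notin> vars_tm ta \<union> vars_tm tb \<union> vars_tm ti \<union> vars_tm tr"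
    "Suc b \<notin> vars_tm ta \<union> vars_tm tb \<union> vars_tm ti \<union> vars_tm tr"
  shows "bd (Beta b ta tb ti tr)"
  unfolding Beta_def using assms by (intro bd_bex bd_conj bd_eq bd_lt) auto

definition beta :: "nat \<Rightarrow> nat \<Rightarrow> nat \<Rightarrow> nat" where
  "beta a bb i = a mod Suc (bb * Suc i)"

definition cdsem :: "nat \<Rightarrow> nat \<Rightarrow> nat \<Rightarrow> nat \<Rightarrow> bool" where
  "cdsem n c a bb \<longleftrightarrow> beta a bb 0 = 0 \<and> (\<forall>i<n. beta a bb (Suc i) = prod_encode (2, beta a bb i)) \<and> c = beta a bb n"

definition Cdef :: "nat \<Rightarrow> nat \<Rightarrow> fm" where
  "Cdef b u = Conj (Beta b (Var (b+11)) (Var (b+12)) Zero Zero)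
   (Conj (ball (b+2) b (Var u) (bex (b+3) b (Succ (Var (b+11))) (bex (b+4) b (Succ (Var (b+11)))
      (Conj (Beta b (Var (b+11)) (Var (b+12)) (Var (b+2)) (Var (b+3)))
       (Conj (Beta b (Var (b+11)) (Var (b+12)) (Succ (Var (b+2))) (Var (b+4)))
             (PE (num 2) (Var (b+3)) (Var (b+4))))))))
     (Beta b (Var (b+11)) (Var (b+12)) (Var u) (Var (b+5))))"

lemma mod_lt_Suc: "(a::nat) mod m < Suc a"
  by (rule le_imp_less_Suc[OF mod_less_eq_dividend])

lemma ev_Cdef: "u < b \<Longrightarrow> ev e (Cdef b u) = cdsem (e u) (e (b+5)) (e (b+11)) (e (b+12))"
  by (auto simp: Cdef_def cdsem_def beta_def mod_lt_Suc)

lemma fv_Cdef: "u < b \<Longrightarrow> fv (Cdef b u) \<subseteq> {u, b+5, b+11, b+12}"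
  by (simp add: Cdef_def) auto

lemma bd_Cdef: "u < b \<Longrightarrow> bd (Cdef b u)"
  unfolding Cdef_def by (intro bd_conj bd_Beta bd_ball bd_bex bd_PE) auto


definition kt :: "bool \<Rightarrow> nat \<Rightarrow> nat \<Rightarrow> tm" where
  "kt fl g u = (if fl then Var u else num g)"

lemma ev_kt[simp]: "ev_tm e (kt fl g u) = (if fl then e u else g)"
  by (simp add: kt_def)

lemma vars_kt[simp]: "vars_tm (kt fl g u) = (if fl then {u} else {})"
  by (simp add: kt_def)

definition DF :: "nat \<Rightarrow> nat \<Rightarrow> nat \<Rightarrow> bool \<Rightarrow> nat \<Rightarrow> nat \<Rightarrow> fm" where
  "DF b vv g fl u z = bex (b+5) b (Succ (Var z)) (bex (b+6) b (Succ (Var z)) (bex (b+7) b (Succ (Var z))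
    (bex (b+8) b (Succ (Var z)) (bex (b+9) b (Succ (Var z)) (bex (b+10) b (Succ (Var z))
   (Conj (Cdef b u)
   (Conj (PE (num (prod_encode (1, vv))) (Var (b+5)) (Var (b+6)))
   (Conj (PE (num 0) (Var (b+6)) (Var (b+7)))
   (Conj (PE (Var (b+7)) (kt fl g u) (Var (b+8)))
   (Conj (PE (num 4) (Var (b+8)) (Var (b+9)))
   (Conj (PE (num vv) (Var (b+9)) (Var (b+10)))
         (PE (num 9) (Var (b+10)) (Var z)))))))))))))"

definition dfsem :: "nat \<Rightarrow> nat \<Rightarrow> nat \<Rightarrow> nat \<Rightarrow> nat \<Rightarrow> nat \<Rightarrow> bool" where
  "dfsem vv K n z a bb \<longleftrightarrow> (\<exists>c<Suc z. \<exists>p2<Suc z. \<exists>p3<Suc z. \<exists>p4<Suc z. \<exists>p5<Suc z. \<exists>p6<Suc z.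
     cdsem n c a bb \<and> p2 = prod_encode (prod_encode (1, vv), c) \<and> p3 = prod_encode (0, p2) \<and>
     p4 = prod_encode (p3, K) \<and> p5 = prod_encode (4, p4) \<and> p6 = prod_encode (vv, p5) \<and>
     z = prod_encode (9, p6))"

lemma ev_DF:
  assumes "u < b" "z \<noteq> u" "z < b \<or> b + 12 < z"
  shows "ev e (DF b vv g fl u z) = dfsem vv (if fl then e u else g) (e u) (e z) (e (b+11)) (e (b+12))"
proof -
  have d: "z \<noteq> b" "z \<noteq> b+5" "z \<noteq> b+6" "z \<noteq> b+7" "z \<noteq> b+8" "z \<noteq> b+9" "z \<noteq> b+10"
    "z \<noteq> b+11" "z \<noteq> b+12" using assms by auto
  show ?thesis using assms(1,2) d by (simp add: DF_def dfsem_def ev_Cdef)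
qed

lemma fv_DF:
  assumes "u < b" "z \<noteq> u" "z < b \<or> b + 12 < z"
  shows "fv (DF b vv g fl u z) \<subseteq> {u, z, b+11, b+12}"
proof -
  have "fv (Cdef b u) \<subseteq> {u, b+5, b+11, b+12}" using assms(1) by (rule fv_Cdef)
  then show ?thesis using assms by (simp add: DF_def) (auto split: if_splits)
qed

lemma bd_DF:
  assumes "u < b" "z \<noteq> u" "z < b \<or> b + 12 < z"
  shows "bd (DF b vv g fl u z)"
  unfolding DF_def using assms by (intro bd_conj bd_Cdef bd_ball bd_bex bd_PE) auto

definition Dst :: "nat \<Rightarrow> nat \<Rightarrow> nat \<Rightarrow> bool \<Rightarrow> nat \<Rightarrow> nat \<Rightarrow> nat \<Rightarrow> fm" where
  "Dst b vv g fl u z w = Conj (lt b (Var z) (Succ (Var w)))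
     (bex (b+11) b (Succ (Var w)) (bex (b+12) b (Succ (Var w)) (DF b vv g fl u z)))"

definition dstsem :: "nat \<Rightarrow> nat \<Rightarrow> nat \<Rightarrow> nat \<Rightarrow> nat \<Rightarrow> bool" where
  "dstsem vv K n z w \<longleftrightarrow> z < Suc w \<and> (\<exists>a<Suc w. \<exists>bb<Suc w. dfsem vv K n z a bb)"

definition okv :: "nat \<Rightarrow> nat \<Rightarrow> nat \<Rightarrow> nat \<Rightarrow> bool" where
  "okv b u z w \<longleftrightarrow> u < b \<and> z \<noteq> u \<and> w \<noteq> u \<and> z \<noteq> w \<and> (z < b \<or> b + 12 < z) \<and> b + 12 < w"

lemma ev_Dst:
  assumes "okv b u z w"
  shows "ev e (Dst b vv g fl u z w) = dstsem vv (if fl then e u else g) (e u) (e z) (e w)"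
proof -
  have d: "z \<noteq> b" "z \<noteq> b+11" "z \<noteq> b+12" "w \<noteq> b" "w \<noteq> b+11" "w \<noteq> b+12" "z \<noteq> w"
    using assms by (auto simp: okv_def)
  have "ev e (Dst b vv g fl u z w) = (e z < Suc (e w) \<and> (\<exists>a<Suc (e w). \<exists>bb<Suc (e w).
      ev (e(b+11:=a, b+12:=bb)) (DF b vv g fl u z)))"
    using d by (simp add: Dst_def ev_lt less_Suc_eq_le)
  also have "\<dots> = dstsem vv (if fl then e u else g) (e u) (e z) (e w)"
    using assms d by (simp add: ev_DF okv_def dstsem_def)
  finally show ?thesis .
qed

lemma fv_Dst:
  assumes "okv b u z w"
  shows "fv (Dst b vv g fl u z w) \<subseteq> {u, z, w}"
proof -
  have "fv (DF b vv g fl u z) \<subseteq> {u, z, b+11, b+12}" using assms by (intro fv_DF) (auto simp: okv_def)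
  then show ?thesis using assms by (simp add: Dst_def okv_def) auto
qed

lemma bd_Dst:
  assumes "okv b u z w"
  shows "bd (Dst b vv g fl u z w)"
  unfolding Dst_def using assms by (intro bd_conj bd_DF bd_bex bd_lt) (auto simp: okv_def)

definition R :: "nat \<Rightarrow> nat \<Rightarrow> nat \<Rightarrow> bool \<Rightarrow> nat \<Rightarrow> nat \<Rightarrow> fm" where
  "R b vv g fl u z = Ex (b+13) (Conj (Dst b vv g fl u z (b+13))
      (All (b+14) (Imp (lt b (Var (b+14)) (Var (b+13))) (All (b+15) (Neg (Dst b vv g fl u (b+15) (b+14)))))))"

lemma fv_R:
  assumes "u < b" "z < b" "z \<noteq> u"
  shows "fv (R b vv g fl u z) \<subseteq> {u, z}"
proof -
  have 1: "fv (Dst b vv g fl u z (b+13)) \<subseteq> {u, z, b+13}" using assms by (intro fv_Dst) (auto simp: okv_def)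
  have 2: "fv (Dst b vv g fl u (b+15) (b+14)) \<subseteq> {u, b+15, b+14}" using assms by (intro fv_Dst) (auto simp: okv_def)
  show ?thesis using 1 2 assms by (simp add: R_def) auto
qed



section \<open>Semantics of the coded function\<close>

lemma cop_moduli:
  fixes F :: nat
  assumes ij: "i < j" "j \<le> M" and F: "F = fact M"
  shows "coprime (Suc (F * Suc i)) (Suc (F * Suc j))"
proof (rule coprimeI)
  fix c assume ca: "c dvd Suc (F * Suc i)" and cb: "c dvd Suc (F * Suc j)"
  have "Suc (F * Suc j) - Suc (F * Suc i) = F * (j - i)" using ij by (simp add: diff_mult_distrib2)
  then have cd: "c dvd F * (j - i)" using dvd_diff_nat[OF cb ca] by simp
  have c1: "coprime (Suc (F * Suc i)) F" by (metis coprime_mult_right_iff coprime_Suc_left_nat)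
  have cF: "coprime c F" using c1 ca by auto
  have cji: "c dvd (j - i)" using cF cd coprime_dvd_mult_right_iff by blast
  have "c \<noteq> 0"
  proof
    assume "c = 0"
    then have "j - i = 0" using cji by simp
    then show False using ij by simp
  qed
  moreover have "c \<le> j - i" using cji ij by (intro dvd_imp_le) auto
  ultimately have "c dvd F" unfolding F using ij by (intro dvd_fact) auto
  then have "c dvd F * Suc i" by simp
  then have "c dvd Suc (F * Suc i) - F * Suc i" using ca by (rule dvd_diff_nat[rotated])
  then show "is_unit c" by simp
qed

lemma beta_exists: "\<exists>a bb. \<forall>i\<le>n. beta a bb i = s i"
proof -
  define M where "M = Suc (n + sum s {..n})"
  define F where "F = (fact M :: nat)"
  define m where "m i = Suc (F * Suc i)" for i
  have cop: "\<forall>i\<in>{..n}. \<forall>j\<in>{..n}. i \<noteq> j \<longrightarrow> coprime (m i) (m j)"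
  proof (intro ballI impI)
    fix i j assume ij: "i \<in> {..n}" "j \<in> {..n}" "i \<noteq> j"
    have "j \<le> M" "i \<le> M" using ij M_def by auto
    then show "coprime (m i) (m j)"
      using ij cop_moduli[of i j M F] cop_moduli[of j i M F] F_def m_def
      by (cases "i < j") (auto simp: coprime_commute)
  qed
  obtain x where x: "\<forall>i\<in>{..n}. [x = s i] (mod m i)"
    using chinese_remainder_nat[OF finite_atMost cop] by blast
  have sl: "s i < m i" if "i \<le> n" for i
  proof -
    have "s i \<le> sum s {..n}" using that by (intro member_le_sum) auto
    also have "\<dots> < M" using M_def by simp
    also have "M \<le> F" using F_def fact_ge_self by simp
    also have "F \<le> F * Suc i" by simp
    finally show ?thesis using m_def by simp
  qed
  have "\<forall>i\<le>n. beta x F i = s i"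
  proof (intro allI impI)
    fix i assume "i \<le> n"
    then have "x mod m i = s i mod m i" using x by (auto simp: cong_def)
    then show "beta x F i = s i" using sl[OF \<open>i \<le> n\<close>] by (simp add: beta_def m_def)
  qed
  then show ?thesis by blast
qed

primrec cnum :: "nat \<Rightarrow> nat" where
  "cnum 0 = 0"
| "cnum (Suc n) = prod_encode (2, cnum n)"

lemma code_num: "code_tm (num n) = cnum n"
  by (induct n) (auto simp: prod_encode_def)

lemma cdsem_unique: "cdsem n c a bb \<Longrightarrow> c = cnum n"
proof -
  assume h: "cdsem n c a bb"
  have "\<forall>i\<le>n. beta a bb i = cnum i"
  proof (intro allI impI)
    fix i show "i \<le> n \<Longrightarrow> beta a bb i = cnum i"
      using h by (induct i) (auto simp: cdsem_def)
  qed
  then show ?thesis using h by (simp add: cdsem_def)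
qed

definition Ffun :: "nat \<Rightarrow> nat \<Rightarrow> nat \<Rightarrow> nat" where
  "Ffun vv K c = prod_encode (9, prod_encode (vv, prod_encode (4, prod_encode (prod_encode (0,
      prod_encode (prod_encode (1, vv), c)), K))))"

lemma dfsem_unique: "dfsem vv K n z a bb \<Longrightarrow> z = Ffun vv K (cnum n)"
  by (auto simp: dfsem_def Ffun_def dest: cdsem_unique)

lemma dfsem_exists: "\<exists>a bb. dfsem vv K n (Ffun vv K (cnum n)) a bb"
proof -
  obtain a bb where ab: "\<forall>i\<le>n. beta a bb i = cnum i" using beta_exists by blast
  have cd: "cdsem n (cnum n) a bb" using ab by (auto simp: cdsem_def)
  let ?c = "cnum n"
  let ?p2 = "prod_encode (prod_encode (1, vv), ?c)"
  let ?p3 = "prod_encode (0, ?p2)"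
  let ?p4 = "prod_encode (?p3, K)"
  let ?p5 = "prod_encode (4, ?p4)"
  let ?p6 = "prod_encode (vv, ?p5)"
  let ?z = "prod_encode (9, ?p6)"
  have z: "?z = Ffun vv K ?c" by (simp add: Ffun_def)
  have b6: "?p6 \<le> ?z" by (rule le_prod_encode_2)
  have b5: "?p5 \<le> ?p6" by (rule le_prod_encode_2)
  have b4: "?p4 \<le> ?p5" by (rule le_prod_encode_2)
  have b3: "?p3 \<le> ?p4" by (rule le_prod_encode_1)
  have b2: "?p2 \<le> ?p3" by (rule le_prod_encode_2)
  have b1: "?c \<le> ?p2" by (rule le_prod_encode_2)
  have "dfsem vv K n ?z a bb"
    unfolding dfsem_def using cd b1 b2 b3 b4 b5 b6
    by (intro exI[of _ ?c] exI[of _ ?p2] exI[of _ ?p3] exI[of _ ?p4] exI[of _ ?p5] exI[of _ ?p6]) auto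
  then show ?thesis using z by auto
qed

lemma dstsem_unique: "dstsem vv K n z w \<Longrightarrow> z = Ffun vv K (cnum n)"
  by (auto simp: dstsem_def dest: dfsem_unique)

lemma dstsem_exists: "\<exists>w. dstsem vv K n (Ffun vv K (cnum n)) w"
proof -
  obtain a bb where ab: "dfsem vv K n (Ffun vv K (cnum n)) a bb" using dfsem_exists by blast
  define W where "W = max (Ffun vv K (cnum n)) (max a bb)"
  have "a < Suc W" "bb < Suc W" "Ffun vv K (cnum n) < Suc W" unfolding W_def by auto
  then have "dstsem vv K n (Ffun vv K (cnum n)) W" unfolding dstsem_def using ab by blast
  then show ?thesis by blast
qed



section \<open>Representation of the coded function\<close>

definition DN :: "nat \<Rightarrow> nat \<Rightarrow> nat \<Rightarrow> bool \<Rightarrow> nat \<Rightarrow> nat \<Rightarrow> nat \<Rightarrow> nat \<Rightarrow> fm" where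
  "DN b vv g fl u n z w = subst u (num n) (Dst b vv g fl u z w)"

definition Kv :: "bool \<Rightarrow> nat \<Rightarrow> nat \<Rightarrow> nat" where
  "Kv fl g n = (if fl then n else g)"

lemma DN_ev: "okv b u z w \<Longrightarrow> ev e (DN b vv g fl u n z w) = dstsem vv (Kv fl g n) n (e z) (e w)"
  by (simp add: DN_def ev_subst ev_Dst okv_def Kv_def)

lemma DN_bd: "okv b u z w \<Longrightarrow> bd (DN b vv g fl u n z w)"
  unfolding DN_def by (intro bd_subst bd_Dst) auto

lemma DN_fv: "okv b u z w \<Longrightarrow> fv (DN b vv g fl u n z w) \<subseteq> {z, w}"
  unfolding DN_def using fv_Dst by fastforce

lemma DN_lt: "okv b u z w \<Longrightarrow> PA_prv (Imp (subst w (num j) (DN b vv g fl u n z w)) (lt b (Var z) (num (Suc j))))"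
proof -
  assume ok: "okv b u z w"
  then have d: "u \<noteq> b" "w \<noteq> b" "z \<noteq> w" "z \<noteq> u" "w \<noteq> u" by (auto simp: okv_def)
  show ?thesis using d unfolding DN_def Dst_def by (simp add: hconj1)
qed

lemma DN_closed:
  assumes "okv b u z w"
  shows "bd (subst z (num l) (subst w (num j) (DN b vv g fl u n z w)))"
    "fv (subst z (num l) (subst w (num j) (DN b vv g fl u n z w))) = {}"
    "ev e (subst z (num l) (subst w (num j) (DN b vv g fl u n z w))) = dstsem vv (Kv fl g n) n l j"
proof -
  have zw: "z \<noteq> w" using assms by (simp add: okv_def)
  show "bd (subst z (num l) (subst w (num j) (DN b vv g fl u n z w)))"
    using assms by (intro bd_subst DN_bd) auto
  show "fv (subst z (num l) (subst w (num j) (DN b vv g fl u n z w))) = {}"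
    using DN_fv[OF assms, of vv g fl n] by auto
  show "ev e (subst z (num l) (subst w (num j) (DN b vv g fl u n z w))) = dstsem vv (Kv fl g n) n l j"
    using zw by (simp add: ev_subst DN_ev[OF assms])
qed

lemma DN_inst_false:
  assumes ok: "okv b u z w" and nd: "\<not> dstsem vv (Kv fl g n) n l j"
  shows "PA_prv (Imp (Eq (Var z) (num l)) (Imp (subst w (num j) (DN b vv g fl u n z w)) B))"
proof -
  let ?X = "subst w (num j) (DN b vv g fl u n z w)"
  have "PA_prv (Neg (subst z (num l) ?X))"
    using DN_closed[OF ok, where l=l and j=j and vv=vv and g=g and fl=fl and n=n] nd by (intro bd_false) auto
  moreover have "PA_prv (Imp (Eq (Var z) (num l)) (Imp (subst z (Var z) ?X) (subst z (num l) ?X)))"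
    by (rule ax_eqsub) simp_all
  ultimately show ?thesis by (rule TT2) (auto simp: tautology_def)
qed

lemma DN_enum:
  assumes ok: "okv b u z w" and bB: "b \<notin> fv B"
    and h: "\<And>l. l < Suc j \<Longrightarrow> PA_prv (Imp (Eq (Var z) (num l)) (Imp (subst w (num j) (DN b vv g fl u n z w)) B))"
  shows "PA_prv (Imp (subst w (num j) (DN b vv g fl u n z w)) B)"
proof -
  let ?X = "subst w (num j) (DN b vv g fl u n z w)"
  have fX: "fv ?X \<subseteq> {z}" using DN_fv[OF ok, of vv g fl n] fv_subst_closed[of "num j" w] by auto
  have zb: "z \<noteq> b" using ok by (auto simp: okv_def)
  have "PA_prv (Imp (lt b (Var z) (num (Suc j))) (Imp ?X B))"
    by (rule enum_lt) (use zb fX bB h in auto)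
  with DN_lt[OF ok] show ?thesis by (rule TT2) (auto simp: tautology_def)
qed

lemma DN_refute:
  assumes ok: "okv b u z w" and nd: "\<And>l. \<not> dstsem vv (Kv fl g n) n l j"
  shows "PA_prv (Neg (subst w (num j) (DN b vv g fl u n z w)))"
proof -
  have "PA_prv (Imp (subst w (num j) (DN b vv g fl u n z w)) Bot)"
    by (rule DN_enum[OF ok]) (simp_all add: DN_inst_false[OF ok nd])
  then show ?thesis by (rule Bot_neg)
qed

lemma DN_pin:
  assumes ok: "okv b u z w" and un: "\<And>l. dstsem vv (Kv fl g n) n l j \<Longrightarrow> l = f"
  shows "PA_prv (Imp (subst w (num j) (DN b vv g fl u n z w)) (Eq (Var z) (num f)))"
proof (rule DN_enum[OF ok])
  show "b \<notin> fv (Eq (Var z) (num f))" using ok by (auto simp: okv_def)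
  fix l
  show "PA_prv (Imp (Eq (Var z) (num l)) (Imp (subst w (num j) (DN b vv g fl u n z w)) (Eq (Var z) (num f))))"
  proof (cases "l = f")
    case True
    have hh: "PA_prv (Imp (Eq (Var z) (num l)) (Eq (Var z) (num l)))" by (rule hyp)
    have "PA_prv (Imp (Eq (Var z) (num l)) (Imp (subst w (num j) (DN b vv g fl u n z w)) (Eq (Var z) (num l))))"
      using hh by (rule TT1) (auto simp: tautology_def)
    then show ?thesis using True by simp
  next
    case False
    then have "\<not> dstsem vv (Kv fl g n) n l j" using un by blast
    then show ?thesis by (rule DN_inst_false[OF ok])
  qed
qed


lemma subst_tm_commute: "x \<noteq> y \<Longrightarrow> vars_tm u = {} \<Longrightarrow> vars_tm v = {} \<Longrightarrow>
  subst_tm x u (subst_tm y v t) = subst_tm y v (subst_tm x u t)"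
  by (induct t) auto

lemma subst_commute: "x \<noteq> y \<Longrightarrow> vars_tm u = {} \<Longrightarrow> vars_tm v = {} \<Longrightarrow>
  subst x u (subst y v a) = subst y v (subst x u a)"
  by (induct a) (auto simp: subst_tm_commute)

theorem rep:
  assumes ub: "u < b" and zb: "z < b" and zu: "z \<noteq> u"
  shows "PA_prv (subst z (num (Ffun vv (Kv fl g n) (cnum n))) (subst u (num n) (R b vv g fl u z)))"
    and "PA_prv (Imp (subst u (num n) (R b vv g fl u z)) (Eq (Var z) (num (Ffun vv (Kv fl g n) (cnum n)))))"
proof -
  define f where "f = Ffun vv (Kv fl g n) (cnum n)"
  define K where "K = Kv fl g n"
  define W where "W = b + 13"
  define W' where "W' = b + 14"
  define Z' where "Z' = b + 15"
  let ?D = "DN b vv g fl u n"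
  have ok1: "okv b u z W" using ub zb zu W_def by (auto simp: okv_def)
  have ok2: "okv b u Z' W'" using ub W'_def Z'_def by (auto simp: okv_def)
  have RS: "subst u (num n) (R b vv g fl u z) = Ex W (Conj (?D z W)
      (All W' (Imp (lt b (Var W') (Var W)) (All Z' (Neg (?D Z' W'))))))"
    using ub W_def W'_def Z'_def by (simp add: R_def DN_def)
  have fvD2: "fv (?D Z' W') \<subseteq> {Z', W'}" using DN_fv[OF ok2] .
  have fvD1: "fv (?D z W) \<subseteq> {z, W}" using DN_fv[OF ok1] .
  define P where "P w = (\<exists>l. dstsem vv K n l w)" for w
  define w0 where "w0 = (LEAST w. P w)"
  have Pex: "\<exists>w. P w" using dstsem_exists P_def by blast
  have Pw0: "P w0" unfolding w0_def using Pex by (rule LeastI_ex)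
  have lessw0: "\<not> P w" if "w < w0" for w using that not_less_Least w0_def by blast
  have uniq: "l = f" if "dstsem vv K n l w" for l w using that dstsem_unique f_def K_def by blast
  have dw0: "dstsem vv K n f w0" using Pw0 uniq P_def by blast
  have dj: "\<And>l. \<not> dstsem vv K n l j" if "j < w0" for j using lessw0[OF that] P_def by blast
  have dd: "z \<noteq> W" "z \<noteq> W'" "z \<noteq> Z'" "z \<noteq> b" "W \<noteq> W'" "W \<noteq> Z'" "W' \<noteq> Z'" "b \<noteq> W" "b \<noteq> W'" "b \<noteq> Z'"
    using zb W_def W'_def Z'_def by auto
  have zfresh: "subst z (num f) (?D Z' W') = ?D Z' W'" using fvD2 dd by (intro subst_fresh) auto
  have Wfresh: "subst W (num w0) (?D Z' W') = ?D Z' W'" using fvD2 dd by (intro subst_fresh) auto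
  have part1: "PA_prv (subst W (num w0) (subst z (num f) (?D z W)))"
  proof -
    have "subst W (num w0) (subst z (num f) (?D z W)) = subst z (num f) (subst W (num w0) (?D z W))"
      using dd by (intro subst_commute) auto
    moreover have "PA_prv (subst z (num f) (subst W (num w0) (?D z W)))"
      using DN_closed[OF ok1, where l=f and j=w0 and vv=vv and g=g and fl=fl and n=n] dw0 K_def
      by (intro bd_true) auto
    ultimately show ?thesis by simp
  qed
  have part2: "PA_prv (All W' (Imp (lt b (Var W') (num w0)) (All Z' (Neg (?D Z' W')))))"
  proof (rule gen, rule enum_lt)
    show "b \<notin> vars_tm (Var W')" using dd by simp
    show "b \<notin> fv (All Z' (Neg (?D Z' W')))" using fvD2 dd by auto
    fix j assume j: "j < w0"
    have "PA_prv (Neg (subst W' (num j) (?D Z' W')))"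
      using DN_refute[OF ok2] dj[OF j] K_def by blast
    then have s: "PA_prv (subst W' (num j) (All Z' (Neg (?D Z' W'))))" using dd by (simp add: gen)
    have e: "PA_prv (Imp (Eq (num j) (Var W')) (Imp (subst W' (num j) (All Z' (Neg (?D Z' W'))))
              (subst W' (Var W') (All Z' (Neg (?D Z' W'))))))"
      by (rule ax_eqsub) (simp, rule substitutable_self)
    from eq_sym_imp[of "Var W'" "num j"] e s
    show "PA_prv (Imp (Eq (Var W') (num j)) (All Z' (Neg (?D Z' W'))))"
      by (rule TT3) (auto simp: tautology_def)
  qed
  have "PA_prv (Imp (subst W (num w0) (Conj (subst z (num f) (?D z W))
      (All W' (Imp (lt b (Var W') (Var W)) (All Z' (Neg (?D Z' W')))))))
      (Ex W (Conj (subst z (num f) (?D z W)) (All W' (Imp (lt b (Var W') (Var W)) (All Z' (Neg (?D Z' W'))))))))"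
    by (rule ex_intro) simp
  moreover have "PA_prv (subst W (num w0) (Conj (subst z (num f) (?D z W))
      (All W' (Imp (lt b (Var W') (Var W)) (All Z' (Neg (?D Z' W')))))))"
  proof -
    have cj: "PA_prv (Conj (subst W (num w0) (subst z (num f) (?D z W)))
       (All W' (Imp (lt b (Var W') (num w0)) (All Z' (Neg (?D Z' W'))))))"
      using part1 part2 by (rule TT2) (auto simp: tautology_def)
    then show ?thesis using dd Wfresh by simp
  qed
  ultimately have ex: "PA_prv (Ex W (Conj (subst z (num f) (?D z W)) (All W' (Imp (lt b (Var W') (Var W)) (All Z' (Neg (?D Z' W')))))))"
    by (rule mp)
  show "PA_prv (subst z (num (Ffun vv (Kv fl g n) (cnum n))) (subst u (num n) (R b vv g fl u z)))"
    using ex RS dd zfresh f_def by simp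
  let ?M = "All W' (Imp (lt b (Var W') (Var W)) (All Z' (Neg (?D Z' W'))))"
  let ?H = "Conj (?D z W) ?M"
  let ?G = "Eq (Var z) (num f)"
  have fvM: "fv ?M \<subseteq> {W}" using fvD2 by auto
  have c1: "PA_prv (Imp (lt b (Var W) (num w0)) (Imp ?H ?G))"
  proof (rule enum_lt)
    show "b \<notin> vars_tm (Var W)" using dd by simp
    show "b \<notin> fv (Imp ?H ?G)" using fvD1 fvM dd by auto
    fix j assume j: "j < w0"
    have r: "PA_prv (Neg (subst W (num j) (?D z W)))" using DN_refute[OF ok1] dj[OF j] K_def by blast
    have e: "PA_prv (Imp (Eq (Var W) (num j)) (Imp (subst W (Var W) (?D z W)) (subst W (num j) (?D z W))))"
      by (rule ax_eqsub) simp_all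
    from r e show "PA_prv (Imp (Eq (Var W) (num j)) (Imp ?H ?G))" by (rule TT2) (auto simp: tautology_def)
  qed
  have c2: "PA_prv (Imp (Eq (Var W) (num w0)) (Imp ?H ?G))"
  proof -
    have r: "PA_prv (Imp (subst W (num w0) (?D z W)) ?G)"
      using DN_pin[OF ok1, where f=f] uniq K_def by blast
    have e: "PA_prv (Imp (Eq (Var W) (num w0)) (Imp (subst W (Var W) (?D z W)) (subst W (num w0) (?D z W))))"
      by (rule ax_eqsub) simp_all
    from r e show ?thesis by (rule TT2) (auto simp: tautology_def)
  qed
  have c3: "PA_prv (Imp (lt b (num w0) (Var W)) (Imp ?H ?G))"
  proof -
    have a1: "PA_prv (Imp ?M (Imp (lt b (num w0) (Var W)) (All Z' (Neg (subst W' (num w0) (?D Z' W'))))))"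
      using ax_inst[of W' "num w0" "Imp (lt b (Var W') (Var W)) (All Z' (Neg (?D Z' W')))"] dd not_sym[OF dd(7)] by simp
    have a2: "PA_prv (Imp (All Z' (Neg (subst W' (num w0) (?D Z' W')))) (Neg (subst Z' (num f) (subst W' (num w0) (?D Z' W')))))"
      using ax_inst[of Z' "num f" "Neg (subst W' (num w0) (?D Z' W'))"] by simp
    have a3: "PA_prv (subst Z' (num f) (subst W' (num w0) (?D Z' W')))"
      using DN_closed[OF ok2, where l=f and j=w0 and vv=vv and g=g and fl=fl and n=n] dw0 K_def
      by (intro bd_true) auto
    from a1 a2 a3 show ?thesis by (rule TT3) (auto simp: tautology_def)
  qed
  have "PA_prv (Imp ?H ?G)"
    using trich[OF dd(8), of w0] c1 c2 c3 by (rule TT4) (auto simp: tautology_def)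
  then have "PA_prv (Imp (Ex W ?H) ?G)" using dd by (intro ex_elim) auto
  then show "PA_prv (Imp (subst u (num n) (R b vv g fl u z)) (Eq (Var z) (num (Ffun vv (Kv fl g n) (cnum n)))))"
    using RS f_def by simp
qed



lemma E_iff: assumes t: "vars_tm t = {}"
  shows "PA_prv (Iff (Ex v (Conj (Eq (Var v) t) a)) (subst v t a))"
proof -
  have e: "PA_prv (Imp (Eq (Var v) t) (Imp (subst v (Var v) a) (subst v t a)))"
    by (rule ax_eqsub) (simp_all add: t)
  have "PA_prv (Imp (Conj (Eq (Var v) t) a) (subst v t a))"
    using e by (rule TT1) (auto simp: tautology_def)
  then have d1: "PA_prv (Imp (Ex v (Conj (Eq (Var v) t) a)) (subst v t a))"
    by (rule ex_elim) (simp add: t)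
  have i: "PA_prv (Imp (subst v t (Conj (Eq (Var v) t) a)) (Ex v (Conj (Eq (Var v) t) a)))"
    by (rule ex_intro) (simp add: t)
  then have i2: "PA_prv (Imp (Conj (Eq t t) (subst v t a)) (Ex v (Conj (Eq (Var v) t) a)))"
    using t by simp
  from d1 i2 ax_refl[of t] show ?thesis by (rule TT3) (auto simp: tautology_def)
qed

lemma rep_iff:
  assumes a1: "PA_prv (Imp A (Eq (Var y) (num k)))" and a2: "PA_prv (subst y (num k) A)"
    and fB: "fv B \<subseteq> {y}"
  shows "PA_prv (Iff (Ex y (Conj A B)) (subst y (num k) B))"
proof -
  have e: "PA_prv (Imp (Eq (Var y) (num k)) (Imp (subst y (Var y) B) (subst y (num k) B)))"
    by (rule ax_eqsub) simp_all
  have "PA_prv (Imp (Conj A B) (subst y (num k) B))"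
    using a1 e by (rule TT2) (auto simp: tautology_def)
  then have d1: "PA_prv (Imp (Ex y (Conj A B)) (subst y (num k) B))"
    by (rule ex_elim) simp
  have i: "PA_prv (Imp (subst y (num k) (Conj A B)) (Ex y (Conj A B)))"
    by (rule ex_intro) simp
  from d1 i a2 show ?thesis by (rule TT3) (auto simp: tautology_def)
qed

lemma iff_trans: assumes "PA_prv (Iff a b)" "PA_prv (Iff b c)" shows "PA_prv (Iff a c)"
  using assms by (rule TT2) (auto simp: tautology_def)

theorem mainTheorem1:
  fixes \<phi> :: fm and x :: nat
  assumes "fv \<phi> = {x}"
  shows "\<exists>\<sigma> \<tau>. sentence \<sigma> \<and> sentence \<tau> \<and>
           PA_prv (Iff \<sigma> (subst x (num (gn \<tau>)) \<phi>)) \<and>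
           PA_prv (Iff \<tau> (Neg (subst x (num (gn \<sigma>)) \<phi>)))"
proof -
  note fvp = assms
  define m where "m = Max (insert x (allv \<phi>))"
  have mx: "v \<le> m" if "v \<in> insert x (allv \<phi>)" for v
    unfolding m_def using that by simp
  define V where "V = m + 1"
  define Y where "Y = m + 2"
  define Z where "Z = m + 3"
  define b where "b = m + 4"
  define g where "g = gn \<phi>"
  have VYZ: "V \<notin> allv \<phi>" "Y \<notin> allv \<phi>" "Z \<notin> allv \<phi>" "x \<noteq> V" "x \<noteq> Y" "x \<noteq> Z"
    using mx V_def Y_def Z_def by fastforce+
  have lt: "V < b" "Y < b" "Z < b" "V \<noteq> Y" "Y \<noteq> Z" "V \<noteq> Z"
    using V_def Y_def Z_def b_def by auto
  define Rh where "Rh = R b x g False Y Z"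
  define Rd where "Rd = R b V 0 True V Y"
  define \<chi> where "\<chi> = Ex Z (Conj Rh (Neg (subst x (Var Z) \<phi>)))"
  define \<theta> where "\<theta> = Ex Y (Conj Rd \<chi>)"
  define n where "n = gn \<theta>"
  define \<tau> where "\<tau> = Ex V (Conj (Eq (Var V) (num n)) \<theta>)"
  define \<sigma> where "\<sigma> = Ex x (Conj (Eq (Var x) (num (gn \<tau>))) \<phi>)"
  have fvRh: "fv Rh \<subseteq> {Y, Z}" unfolding Rh_def using lt by (intro fv_R) auto
  have fvRd: "fv Rd \<subseteq> {V, Y}" unfolding Rd_def using lt by (intro fv_R) auto
  have fvpZ: "fv (subst x (Var Z) \<phi>) \<subseteq> {Z}" using fv_subst[of x "Var Z" \<phi>] fvp by auto
  have fvchi: "fv \<chi> \<subseteq> {Y}" using fvRh fvpZ unfolding \<chi>_def by auto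
  have fvtheta: "fv \<theta> \<subseteq> {V}" using fvRd fvchi unfolding \<theta>_def by auto
  have s_tau: "sentence \<tau>" using fvtheta unfolding sentence_def \<tau>_def by auto
  have s_sigma: "sentence \<sigma>" using fvp unfolding sentence_def \<sigma>_def by auto
  have gtau: "gn \<tau> = Ffun V n (cnum n)"
    by (simp add: \<tau>_def Ffun_def code_num n_def)
  have gsigma: "gn \<sigma> = Ffun x g (cnum (gn \<tau>))"
    by (simp add: \<sigma>_def Ffun_def code_num g_def)
  have I1: "PA_prv (Iff \<sigma> (subst x (num (gn \<tau>)) \<phi>))" unfolding \<sigma>_def by (rule E_iff) simp
  have t1: "PA_prv (Iff \<tau> (subst V (num n) \<theta>))" unfolding \<tau>_def by (rule E_iff) simp
  have Vchi: "subst V (num n) \<chi> = \<chi>" using fvchi lt by (intro subst_fresh) auto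
  have th: "subst V (num n) \<theta> = Ex Y (Conj (subst V (num n) Rd) \<chi>)"
    using Vchi lt unfolding \<theta>_def by simp
  have r1: "PA_prv (subst Y (num (Ffun V n (cnum n))) (subst V (num n) Rd))"
    using rep(1)[where u=V and b=b and z=Y and vv=V and g=0 and fl=True and n=n] lt unfolding Rd_def by (simp add: Kv_def)
  have r2: "PA_prv (Imp (subst V (num n) Rd) (Eq (Var Y) (num (Ffun V n (cnum n)))))"
    using rep(2)[where u=V and b=b and z=Y and vv=V and g=0 and fl=True and n=n] lt unfolding Rd_def by (simp add: Kv_def)
  have t2: "PA_prv (Iff (subst V (num n) \<theta>) (subst Y (num (gn \<tau>)) \<chi>))"
    unfolding th gtau by (rule rep_iff[OF r2 r1 fvchi])
  define d where "d = gn \<tau>"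
  have Ychi: "subst Y (num d) (Neg (subst x (Var Z) \<phi>)) = Neg (subst x (Var Z) \<phi>)"
    using fvpZ lt by (intro subst_fresh) auto
  have ch: "subst Y (num d) \<chi> = Ex Z (Conj (subst Y (num d) Rh) (Neg (subst x (Var Z) \<phi>)))"
    using Ychi lt unfolding \<chi>_def by simp
  have r3: "PA_prv (subst Z (num (Ffun x g (cnum d))) (subst Y (num d) Rh))"
    using rep(1)[where u=Y and b=b and z=Z and vv=x and g=g and fl=False and n=d] lt unfolding Rh_def by (simp add: Kv_def)
  have r4: "PA_prv (Imp (subst Y (num d) Rh) (Eq (Var Z) (num (Ffun x g (cnum d)))))"
    using rep(2)[where u=Y and b=b and z=Z and vv=x and g=g and fl=False and n=d] lt unfolding Rh_def by (simp add: Kv_def)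
  have fvn: "fv (Neg (subst x (Var Z) \<phi>)) \<subseteq> {Z}" using fvpZ by simp
  have t3: "PA_prv (Iff (subst Y (num d) \<chi>) (subst Z (num (Ffun x g (cnum d))) (Neg (subst x (Var Z) \<phi>))))"
    unfolding ch by (rule rep_iff[OF r4 r3 fvn])
  have comp: "subst Z (num (Ffun x g (cnum d))) (Neg (subst x (Var Z) \<phi>)) = Neg (subst x (num (gn \<sigma>)) \<phi>)"
    using subst_comp[OF VYZ(3)] gsigma d_def by simp
  have I2: "PA_prv (Iff \<tau> (Neg (subst x (num (gn \<sigma>)) \<phi>)))"
    using iff_trans[OF iff_trans[OF t1 t2] t3[unfolded comp, unfolded d_def]] by simp
  show ?thesis using s_sigma s_tau I1 I2 by blast
qed


end
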